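(* Let $G$ be a finite group and let $\underline{\mathcal{F}}$ be an indexing system for $G$. Let $\mathbf{O}(\underline{\mathcal{F}})$ be the set of exponents whose $H$-th set consists of the nontrivial orbits $H/K\in\underline{\mathcal{F}}$ (i.e. $K\subsetneq H$), each with some chosen ordering. Then the class of admissible sets of the operad $\mathcal{SM}_{\mathbf{O}(\underline{\mathcal{F}})}$ is $\underline{\mathcal{F}}$.
   Context: A set of exponents $\mathcal{N}=(\mathcal{N}(H))_{H\subseteq G}$: for each subgroup $H$ a set of finite $H$-sets $T$ with chosen orderings $\{1,\dots,|T|\}\cong T$; $\sigma:H\to\Sigma_{|T|}$ the permutation representation and $\Gamma_T=\{(h,\sigma(h))\}\subseteq G\times\Sigma_{|T|}$. With $\mathbb{F}$ the free operad functor on symmetric sequences of $G$-sets and $\widetilde{X}$ the chaotic category on a set $X$ (one morphism between any two objects, applied levelwise), $\mathcal{SM}_{\mathcal{N}}=\widetilde{\mathbb{F}(S_{\mathcal{N}})}$ where $S_{\mathcal{N}}=(G\times\Sigma_0)/\Gamma_\varnothing\sqcup(G\times\Sigma_2)/\Gamma_{**}\sqcup\coprod_{T\in\mathcal{N}}(G\times\Sigma_{|T|})/\Gamma_T$ ($\varnothing$, $**$ trivial). A finite $H$-set $T$ with $|T|=n$ is admissible for an operad $\mathscr{O}$ in $G$-categories if $\mathscr{O}(n)^{\Gamma_T}\neq\varnothing$. An indexing system (Blumberg–Hill) is a family of finite $H$-sets for all $H\subseteq G$ containing trivial actions, closed under isomorphism, restriction, conjugation, subobjects, finite coproducts and products,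 and self-induction. *)

theory Defs
  imports "HOL-Algebra.Group" "HOL-Combinatorics.Permutations"
begin

text \<open>A finite H-set T with a chosen ordering {1..|T|} = T is encoded as a pair (n, a):
  the underlying set is {0..<n} and a h is the permutation by which h in H acts
  (only the values a h i for h in H and i < n matter).\<close>

definition fin_hset :: "'g monoid \<Rightarrow> 'g set \<Rightarrow> nat \<Rightarrow> ('g \<Rightarrow> nat \<Rightarrow> nat) \<Rightarrow> bool" where
  "fin_hset G H n a \<longleftrightarrow> subgroup H G
     \<and> (\<forall>h\<in>H. \<forall>i<n. a h i < n)
     \<and> (\<forall>i<n. a \<one>\<^bsub>G\<^esub> i = i)
     \<and> (\<forall>h\<in>H. \<forall>k\<in>H. \<forall>i<n. a (h \<otimes>\<^bsub>G\<^esub> k) i = a h (a k i))"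

definition equivariant :: "'g set \<Rightarrow> nat \<Rightarrow> ('g \<Rightarrow> nat \<Rightarrow> nat) \<Rightarrow> ('g \<Rightarrow> nat \<Rightarrow> nat) \<Rightarrow> (nat \<Rightarrow> nat) \<Rightarrow> bool" where
  "equivariant H m b a f \<longleftrightarrow> (\<forall>h\<in>H. \<forall>i<m. f (b h i) = a h (f i))"

text \<open>(n, a) is (an ordering of) the orbit H/K: transitive, with a point (the coset eK)
  whose stabiliser is exactly K.\<close>
definition is_orbit :: "'g monoid \<Rightarrow> 'g set \<Rightarrow> 'g set \<Rightarrow> nat \<Rightarrow> ('g \<Rightarrow> nat \<Rightarrow> nat) \<Rightarrow> bool" where
  "is_orbit G H K n a \<longleftrightarrow> fin_hset G H n a \<and>
     (\<exists>i0<n. {h \<in> H. a h i0 = i0} = K \<and> (\<forall>j<n. \<exists>h\<in>H. a h i0 = j))"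

definition indexing_system :: "'g monoid \<Rightarrow> ('g set \<Rightarrow> nat \<Rightarrow> ('g \<Rightarrow> nat \<Rightarrow> nat) \<Rightarrow> bool) \<Rightarrow> bool" where
  "indexing_system G F \<longleftrightarrow>
     \<comment> \<open>consists of finite H-sets for subgroups H\<close>
     (\<forall>H n a. F H n a \<longrightarrow> fin_hset G H n a)
     \<comment> \<open>contains trivial actions\<close>
   \<and> (\<forall>H n. subgroup H G \<longrightarrow> F H n (\<lambda>h i. i))
     \<comment> \<open>closed under isomorphism\<close>
   \<and> (\<forall>H n a b f. F H n a \<longrightarrow> fin_hset G H n b \<longrightarrow> bij_betw f {..<n} {..<n}
        \<longrightarrow> equivariant H n a b f \<longrightarrow> F H n b)
     \<comment> \<open>closed under restriction\<close>
   \<and> (\<forall>H K n a. F H n a \<longrightarrow> subgroup K G \<longrightarrow> K \<subseteq> H \<longrightarrow> F K n a)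
     \<comment> \<open>closed under conjugation\<close>
   \<and> (\<forall>H n a g. F H n a \<longrightarrow> g \<in> carrier G \<longrightarrow>
        F ((\<lambda>h. g \<otimes>\<^bsub>G\<^esub> h \<otimes>\<^bsub>G\<^esub> inv\<^bsub>G\<^esub> g) ` H) n
          (\<lambda>h. a (inv\<^bsub>G\<^esub> g \<otimes>\<^bsub>G\<^esub> h \<otimes>\<^bsub>G\<^esub> g)))
     \<comment> \<open>closed under subobjects (an H-set embedding equivariantly into a member)\<close>
   \<and> (\<forall>H n a m b f. F H n a \<longrightarrow> fin_hset G H m b \<longrightarrow> inj_on f {..<m}
        \<longrightarrow> f ` {..<m} \<subseteq> {..<n} \<longrightarrow> equivariant H m b a f \<longrightarrow> F H m b)
     \<comment> \<open>closed under finite coproducts\<close>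
   \<and> (\<forall>H n a m b. F H n a \<longrightarrow> F H m b \<longrightarrow>
        F H (n + m) (\<lambda>h i. if i < n then a h i else n + b h (i - n)))
     \<comment> \<open>closed under finite products\<close>
   \<and> (\<forall>H n a m b. F H n a \<longrightarrow> F H m b \<longrightarrow>
        F H (n * m) (\<lambda>h i. a h (i div m) * m + b h (i mod m)))
     \<comment> \<open>closed under self-induction: if H/K is in F(H) and T is in F(K) then H \<times>_K T is in F(H).
        H \<times>_K T is characterised up to isomorphism as an H-set X with an H-map to H/K
        whose fibre over the coset eK is K-isomorphic to T.\<close>
   \<and> (\<forall>H K p c i0 m b n x \<pi> f.
        fin_hset G H p c \<longrightarrow> F H p c \<longrightarrow> i0 < p \<longrightarrow> {h \<in> H. c h i0 = i0} = K
        \<longrightarrow> (\<forall>j<p. \<exists>h\<in>H. c h i0 = j)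
        \<longrightarrow> F K m b \<longrightarrow> fin_hset G H n x
        \<longrightarrow> \<pi> ` {..<n} \<subseteq> {..<p} \<longrightarrow> equivariant H n x c \<pi>
        \<longrightarrow> bij_betw f {..<m} {i. i < n \<and> \<pi> i = i0} \<longrightarrow> equivariant K m b x f
        \<longrightarrow> F H n x)"

text \<open>A set of exponents is given as an indexed family: an index set I, and for each index
  i a subgroup grp i and an ordered finite (grp i)-set dat i = (n, a).
  The generators of S_N are the summands (G \<times> \<Sigma>_0)/\<Gamma>_\<emptyset> (tag Nul),
  (G \<times> \<Sigma>_2)/\<Gamma>_** (tag Bin) and (G \<times> \<Sigma>_|T|)/\<Gamma>_T (tag Ex i).\<close>

datatype 'i gtag = Nul | Bin | Ex 'i

fun tag_grp :: "'g monoid \<Rightarrow> ('i \<Rightarrow> 'g set) \<Rightarrow> 'i gtag \<Rightarrow> 'g set" where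
  "tag_grp G grp Nul = carrier G"
| "tag_grp G grp Bin = carrier G"
| "tag_grp G grp (Ex i) = grp i"

fun tag_ar :: "('i \<Rightarrow> nat \<times> ('g \<Rightarrow> nat \<Rightarrow> nat)) \<Rightarrow> 'i gtag \<Rightarrow> nat" where
  "tag_ar dat Nul = 0"
| "tag_ar dat Bin = 2"
| "tag_ar dat (Ex i) = fst (dat i)"

fun tag_perm :: "('i \<Rightarrow> nat \<times> ('g \<Rightarrow> nat \<Rightarrow> nat)) \<Rightarrow> 'i gtag \<Rightarrow> 'g \<Rightarrow> nat \<Rightarrow> nat" where
  "tag_perm dat Nul h = id"
| "tag_perm dat Bin h = id"
| "tag_perm dat (Ex i) h = (\<lambda>j. if j < fst (dat i) then snd (dat i) h j else j)"

fun tag_valid :: "'i set \<Rightarrow> 'i gtag \<Rightarrow> bool" where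
  "tag_valid I Nul = True"
| "tag_valid I Bin = True"
| "tag_valid I (Ex i) = (i \<in> I)"

text \<open>Trees representing elements of the free operad F(S_N): a node carries a generator,
  i.e. a summand tag x together with a representative (g, \<tau>) \<in> G \<times> \<Sigma>_k of the coset
  (g, \<tau>)\<Gamma>, and an ordered list of children (child j plugged into input j).\<close>

datatype ('i, 'g) ftree = Leaf nat | Node "'i gtag" 'g "nat \<Rightarrow> nat" "('i, 'g) ftree list"

fun leaves :: "('i, 'g) ftree \<Rightarrow> nat list" where
  "leaves (Leaf j) = [j]"
| "leaves (Node x g \<tau> ts) = concat (map leaves ts)"

inductive nodes_ok :: "'g monoid \<Rightarrow> 'i set \<Rightarrow> ('i \<Rightarrow> nat \<times> ('g \<Rightarrow> nat \<Rightarrow> nat))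
    \<Rightarrow> ('i, 'g) ftree \<Rightarrow> bool" for G I dat where
  leaf: "nodes_ok G I dat (Leaf j)"
| node: "\<lbrakk> tag_valid I x; g \<in> carrier G; \<tau> permutes {..<tag_ar dat x};
           length ts = tag_ar dat x; \<forall>t\<in>set ts. nodes_ok G I dat t \<rbrakk>
         \<Longrightarrow> nodes_ok G I dat (Node x g \<tau> ts)"

definition wf_tree :: "'g monoid \<Rightarrow> 'i set \<Rightarrow> ('i \<Rightarrow> nat \<times> ('g \<Rightarrow> nat \<Rightarrow> nat))
    \<Rightarrow> nat \<Rightarrow> ('i, 'g) ftree \<Rightarrow> bool" where
  "wf_tree G I dat n t \<longleftrightarrow> nodes_ok G I dat t \<and> distinct (leaves t) \<and> set (leaves t) = {..<n}"

text \<open>Identification of trees: the congruence generated by the coset relation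
  (g, \<tau>) \<sim> (g h, \<tau> \<sigma>(h)) for h \<in> H and the operadic equivariance relation
  Node (\<rho>\<cdot>s) ts = Node s (ts \<circ> \<rho>).\<close>
inductive feq :: "'g monoid \<Rightarrow> 'i set \<Rightarrow> ('i \<Rightarrow> 'g set) \<Rightarrow> ('i \<Rightarrow> nat \<times> ('g \<Rightarrow> nat \<Rightarrow> nat))
    \<Rightarrow> ('i, 'g) ftree \<Rightarrow> ('i, 'g) ftree \<Rightarrow> bool" for G I grp dat where
  refl: "feq G I grp dat t t"
| sym: "feq G I grp dat s t \<Longrightarrow> feq G I grp dat t s"
| trans: "feq G I grp dat s t \<Longrightarrow> feq G I grp dat t u \<Longrightarrow> feq G I grp dat s u"
| cong: "list_all2 (feq G I grp dat) ts us \<Longrightarrow> feq G I grp dat (Node x g \<tau> ts) (Node x g \<tau> us)"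
| coset: "\<lbrakk> nodes_ok G I dat (Node x g \<tau> ts); h \<in> tag_grp G grp x \<rbrakk> \<Longrightarrow>
     feq G I grp dat (Node x (g \<otimes>\<^bsub>G\<^esub> h) (\<tau> \<circ> tag_perm dat x h) ts) (Node x g \<tau> ts)"
| sigma: "\<lbrakk> nodes_ok G I dat (Node x g \<tau> ts); \<rho> permutes {..<length ts} \<rbrakk> \<Longrightarrow>
     feq G I grp dat (Node x g (\<rho> \<circ> \<tau>) ts) (Node x g \<tau> (map (\<lambda>j. ts ! \<rho> j) [0..<length ts]))"

fun tact :: "'g monoid \<Rightarrow> 'g \<Rightarrow> (nat \<Rightarrow> nat) \<Rightarrow> ('i, 'g) ftree \<Rightarrow> ('i, 'g) ftree" where
  "tact G g' \<pi> (Leaf j) = Leaf (\<pi> j)"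
| "tact G g' \<pi> (Node x g \<tau> ts) = Node x (g' \<otimes>\<^bsub>G\<^esub> g) \<tau> (map (tact G g' \<pi>) ts)"

text \<open>SM_N is the chaotic category on F(S_N), levelwise. The \<Gamma>_T-fixed subcategory of a
  chaotic G-category is the chaotic category on the fixed objects, so it is nonempty iff
  some object (element of F(S_N)(n), i.e. an identification class of trees) is fixed.\<close>
definition SM_admissible :: "'g monoid \<Rightarrow> 'i set \<Rightarrow> ('i \<Rightarrow> 'g set) \<Rightarrow> ('i \<Rightarrow> nat \<times> ('g \<Rightarrow> nat \<Rightarrow> nat))
    \<Rightarrow> 'g set \<Rightarrow> nat \<Rightarrow> ('g \<Rightarrow> nat \<Rightarrow> nat) \<Rightarrow> bool" where
  "SM_admissible G I grp dat H n a \<longleftrightarrow>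
     (\<exists>t. wf_tree G I dat n t \<and> (\<forall>h\<in>H. feq G I grp dat (tact G h (a h) t) t))"

definition O_index :: "'g monoid \<Rightarrow> ('g set \<Rightarrow> nat \<Rightarrow> ('g \<Rightarrow> nat \<Rightarrow> nat) \<Rightarrow> bool) \<Rightarrow> ('g set \<times> 'g set) set" where
  "O_index G F = {(H, K). subgroup H G \<and> subgroup K G \<and> K \<subset> H \<and>
                     (\<exists>p c. is_orbit G H K p c \<and> F H p c)}"

end

theory Submission
  imports Defs
begin

lemma IS_fin0: "indexing_system G F \<Longrightarrow> \<forall>H n a. F H n a \<longrightarrow> fin_hset G H n a"
  unfolding indexing_system_def by (elim conjE) assumption

lemma IS_triv0: "indexing_system G F \<Longrightarrow> \<forall>H n. subgroup H G \<longrightarrow> F H n (\<lambda>h i. i)"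
  unfolding indexing_system_def by (elim conjE) assumption

lemma IS_iso0: "indexing_system G F \<Longrightarrow> \<forall>H n a b f. F H n a \<longrightarrow> fin_hset G H n b \<longrightarrow> bij_betw f {..<n} {..<n}
        \<longrightarrow> equivariant H n a b f \<longrightarrow> F H n b"
  unfolding indexing_system_def by (elim conjE) assumption

lemma IS_restr0: "indexing_system G F \<Longrightarrow> \<forall>H K n a. F H n a \<longrightarrow> subgroup K G \<longrightarrow> K \<subseteq> H \<longrightarrow> F K n a"
  unfolding indexing_system_def by (elim conjE) assumption

lemma IS_conj0: "indexing_system G F \<Longrightarrow> \<forall>H n a g. F H n a \<longrightarrow> g \<in> carrier G \<longrightarrow>
        F ((\<lambda>h. g \<otimes>\<^bsub>G\<^esub> h \<otimes>\<^bsub>G\<^esub> inv\<^bsub>G\<^esub> g) ` H) n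
          (\<lambda>h. a (inv\<^bsub>G\<^esub> g \<otimes>\<^bsub>G\<^esub> h \<otimes>\<^bsub>G\<^esub> g))"
  unfolding indexing_system_def by (elim conjE) assumption

lemma IS_sub0: "indexing_system G F \<Longrightarrow> \<forall>H n a m b f. F H n a \<longrightarrow> fin_hset G H m b \<longrightarrow> inj_on f {..<m}
        \<longrightarrow> f ` {..<m} \<subseteq> {..<n} \<longrightarrow> equivariant H m b a f \<longrightarrow> F H m b"
  unfolding indexing_system_def by (elim conjE) assumption

lemma IS_coprod0: "indexing_system G F \<Longrightarrow> \<forall>H n a m b. F H n a \<longrightarrow> F H m b \<longrightarrow>
        F H (n + m) (\<lambda>h i. if i < n then a h i else n + b h (i - n))"
  unfolding indexing_system_def by (elim conjE) assumption

lemma IS_si0: "indexing_system G F \<Longrightarrow> \<forall>H K p c i0 m b n x \<pi> f.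
        fin_hset G H p c \<longrightarrow> F H p c \<longrightarrow> i0 < p \<longrightarrow> {h \<in> H. c h i0 = i0} = K
        \<longrightarrow> (\<forall>j<p. \<exists>h\<in>H. c h i0 = j)
        \<longrightarrow> F K m b \<longrightarrow> fin_hset G H n x
        \<longrightarrow> \<pi> ` {..<n} \<subseteq> {..<p} \<longrightarrow> equivariant H n x c \<pi>
        \<longrightarrow> bij_betw f {..<m} {i. i < n \<and> \<pi> i = i0} \<longrightarrow> equivariant K m b x f
        \<longrightarrow> F H n x"
  unfolding indexing_system_def by (elim conjE) assumption


definition actL :: "'g monoid \<Rightarrow> 'g set \<Rightarrow> nat set \<Rightarrow> ('g \<Rightarrow> nat \<Rightarrow> nat) \<Rightarrow> bool" where
  "actL G H L a \<longleftrightarrow> subgroup H G \<and> (\<forall>h\<in>H. \<forall>x\<in>L. a h x \<in> L) \<and> (\<forall>x\<in>L. a \<one>\<^bsub>G\<^esub> x = x)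
     \<and> (\<forall>h\<in>H. \<forall>k\<in>H. \<forall>x\<in>L. a (h \<otimes>\<^bsub>G\<^esub> k) x = a h (a k x))"

definition Fset :: "'g monoid \<Rightarrow> ('g set \<Rightarrow> nat \<Rightarrow> ('g \<Rightarrow> nat \<Rightarrow> nat) \<Rightarrow> bool) \<Rightarrow> 'g set \<Rightarrow> nat set \<Rightarrow> ('g \<Rightarrow> nat \<Rightarrow> nat) \<Rightarrow> bool" where
  "Fset G F H L a \<longleftrightarrow> (\<exists>n b e. bij_betw e {..<n} L \<and> F H n b \<and> (\<forall>h\<in>H. \<forall>i<n. e (b h i) = a h (e i)))"


locale isys =
  fixes G :: "'g monoid" and F :: "'g set \<Rightarrow> nat \<Rightarrow> ('g \<Rightarrow> nat \<Rightarrow> nat) \<Rightarrow> bool"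
  assumes grp: "group G" and IS: "indexing_system G F"
begin

lemma IS_fin: "F H n a \<Longrightarrow> fin_hset G H n a"
  using IS_fin0[OF IS] by blast
lemma IS_triv: "subgroup H G \<Longrightarrow> F H n (\<lambda>h i. i)"
  using IS_triv0[OF IS] by blast
lemma IS_iso: "F H n a \<Longrightarrow> fin_hset G H n b \<Longrightarrow> bij_betw f {..<n} {..<n}
        \<Longrightarrow> equivariant H n a b f \<Longrightarrow> F H n b"
  using IS_iso0[OF IS] by blast
lemma IS_restr: "F H n a \<Longrightarrow> subgroup K G \<Longrightarrow> K \<subseteq> H \<Longrightarrow> F K n a"
  using IS_restr0[OF IS] by blast
lemma IS_conj: "F H n a \<Longrightarrow> g \<in> carrier G \<Longrightarrow>
        F ((\<lambda>h. g \<otimes>\<^bsub>G\<^esub> h \<otimes>\<^bsub>G\<^esub> inv\<^bsub>G\<^esub> g) ` H) n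
          (\<lambda>h. a (inv\<^bsub>G\<^esub> g \<otimes>\<^bsub>G\<^esub> h \<otimes>\<^bsub>G\<^esub> g))"
  using IS_conj0[OF IS] by blast
lemma IS_sub: "F H n a \<Longrightarrow> fin_hset G H m b \<Longrightarrow> inj_on f {..<m}
        \<Longrightarrow> f ` {..<m} \<subseteq> {..<n} \<Longrightarrow> equivariant H m b a f \<Longrightarrow> F H m b"
  using IS_sub0[OF IS] by blast
lemma IS_coprod: "F H n a \<Longrightarrow> F H m b \<Longrightarrow>
        F H (n + m) (\<lambda>h i. if i < n then a h i else n + b h (i - n))"
  using IS_coprod0[OF IS] by blast
lemma IS_si:
  assumes "fin_hset G H p c" "F H p c" "i0 < p" "{h \<in> H. c h i0 = i0} = K"
        "\<forall>j<p. \<exists>h\<in>H. c h i0 = j"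
        "F K m b" "fin_hset G H n x"
        "\<pi> ` {..<n} \<subseteq> {..<p}" "equivariant H n x c \<pi>"
        "bij_betw f {..<m} {i. i < n \<and> \<pi> i = i0}" "equivariant K m b x f"
  shows "F H n x"
  by (rule IS_si0[OF IS, rule_format, of H p c i0 K m b n x \<pi> f, OF assms(1-4) assms(5)[rule_format] assms(6-11)])

lemma Fset_actL:
  assumes "Fset G F H L a"
  shows "actL G H L a \<and> finite L"
proof -
  obtain n b e where e: "bij_betw e {..<n} L" and Fb: "F H n b" and eq: "\<forall>h\<in>H. \<forall>i<n. e (b h i) = a h (e i)"
    using assms unfolding Fset_def by blast
  have fh: "fin_hset G H n b" using IS_fin[OF Fb] .
  hence sg: "subgroup H G" unfolding fin_hset_def by blast
  have one: "\<one>\<^bsub>G\<^esub> \<in> H" using sg by (simp add: subgroup.one_closed)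
  have L: "L = e ` {..<n}" using e by (simp add: bij_betw_def)
  have c1: "\<forall>h\<in>H. \<forall>x\<in>L. a h x \<in> L"
  proof (intro ballI)
    fix h x assume "h \<in> H" "x \<in> L"
    then obtain i where "i < n" "x = e i" using L by auto
    have "b h i < n" using fh \<open>h \<in> H\<close> \<open>i < n\<close> unfolding fin_hset_def by blast
    moreover have "a h x = e (b h i)" using eq \<open>h \<in> H\<close> \<open>i < n\<close> \<open>x = e i\<close> by simp
    ultimately show "a h x \<in> L" using L by auto
  qed
  have c2: "\<forall>x\<in>L. a \<one>\<^bsub>G\<^esub> x = x"
  proof
    fix x assume "x \<in> L"
    then obtain i where "i < n" "x = e i" using L by auto
    have "b \<one>\<^bsub>G\<^esub> i = i" using fh \<open>i < n\<close> unfolding fin_hset_def by blast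
    thus "a \<one>\<^bsub>G\<^esub> x = x" using eq one \<open>i < n\<close> \<open>x = e i\<close> by metis
  qed
  have c3: "\<forall>h\<in>H. \<forall>k\<in>H. \<forall>x\<in>L. a (h \<otimes>\<^bsub>G\<^esub> k) x = a h (a k x)"
  proof (intro ballI)
    fix h k x assume hk: "h \<in> H" "k \<in> H" and "x \<in> L"
    then obtain i where i: "i < n" "x = e i" using L by auto
    have mc: "h \<otimes>\<^bsub>G\<^esub> k \<in> H" using sg hk by (simp add: subgroup.m_closed)
    have bk: "b k i < n" using fh hk i unfolding fin_hset_def by blast
    have "a (h \<otimes>\<^bsub>G\<^esub> k) x = e (b (h \<otimes>\<^bsub>G\<^esub> k) i)" using eq mc i by simp
    also have "\<dots> = e (b h (b k i))" using fh hk i unfolding fin_hset_def by simp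
    also have "\<dots> = a h (e (b k i))" using eq hk bk by simp
    also have "\<dots> = a h (a k x)" using eq hk i by simp
    finally show "a (h \<otimes>\<^bsub>G\<^esub> k) x = a h (a k x)" .
  qed
  have "finite L" using L by simp
  thus ?thesis using sg c1 c2 c3 unfolding actL_def by blast
qed

lemma induced_fin_hset:
  assumes "actL G H L a" and e: "bij_betw e {..<m} L"
  defines "b \<equiv> (\<lambda>h i. inv_into {..<m} e (a h (e i)))"
  shows "fin_hset G H m b \<and> (\<forall>h\<in>H. \<forall>i<m. e (b h i) = a h (e i))"
proof -
  have sg: "subgroup H G" and cl: "\<forall>h\<in>H. \<forall>x\<in>L. a h x \<in> L" and o: "\<forall>x\<in>L. a \<one>\<^bsub>G\<^esub> x = x"
    and hm: "\<forall>h\<in>H. \<forall>k\<in>H. \<forall>x\<in>L. a (h \<otimes>\<^bsub>G\<^esub> k) x = a h (a k x)" using assms(1) unfolding actL_def by auto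
  have ei: "\<And>i. i < m \<Longrightarrow> e i \<in> L" using e by (auto simp: bij_betw_def)
  have ie: "\<And>y. y \<in> L \<Longrightarrow> e (inv_into {..<m} e y) = y" using e by (simp add: bij_betw_inv_into_right)
  have ie2: "\<And>i. i < m \<Longrightarrow> inv_into {..<m} e (e i) = i" using e by (simp add: bij_betw_inv_into_left)
  have iel: "\<And>y. y \<in> L \<Longrightarrow> inv_into {..<m} e y < m" using e
    by (metis bij_betw_def inv_into_into lessThan_iff)
  have eq: "\<forall>h\<in>H. \<forall>i<m. e (b h i) = a h (e i)" unfolding b_def using ie ei cl by auto
  have "fin_hset G H m b" unfolding fin_hset_def
  proof (intro conjI sg allI ballI impI)
    fix h i assume "h \<in> H" "i < m" thus "b h i < m" unfolding b_def using iel cl ei by auto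
  next
    fix i assume "i < m" thus "b \<one>\<^bsub>G\<^esub> i = i" unfolding b_def using o ei ie2 by auto
  next
    fix h k i assume hk: "h \<in> H" "k \<in> H" and i: "i < m"
    have "b h (b k i) = inv_into {..<m} e (a h (a k (e i)))" unfolding b_def using ie cl ei i hk by auto
    thus "b (h \<otimes>\<^bsub>G\<^esub> k) i = b h (b k i)" unfolding b_def using hm hk ei i by auto
  qed
  thus ?thesis using eq by blast
qed

lemma Fset_enum:
  assumes Fs: "Fset G F H L a" and e': "bij_betw e' {..<m} L"
    and fh': "fin_hset G H m b'" and eq': "\<forall>h\<in>H. \<forall>i<m. e' (b' h i) = a h (e' i)"
  shows "F H m b'"
proof -
  obtain n b e where e: "bij_betw e {..<n} L" and Fb: "F H n b" and eq: "\<forall>h\<in>H. \<forall>i<n. e (b h i) = a h (e i)"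
    using Fs unfolding Fset_def by blast
  have fh: "fin_hset G H n b" using IS_fin[OF Fb] .
  have nm: "n = m" using e e' by (metis bij_betw_same_card card_lessThan)
  define f where "f = inv_into {..<m} e' \<circ> e"
  have bf: "bij_betw f {..<n} {..<n}" unfolding f_def using e e' nm
    by (metis bij_betw_inv_into bij_betw_trans)
  have "equivariant H n b b' f" unfolding equivariant_def
  proof (intro ballI allI impI)
    fix h i assume h: "h \<in> H" and i: "i < n"
    have bhi: "b h i < n" using fh h i unfolding fin_hset_def by blast
    have fi: "f i < m" using bf i nm by (auto simp: bij_betw_def)
    have efi: "e' (f i) = e i" unfolding f_def using e e' i by (auto simp: bij_betw_def bij_betw_inv_into_right)
    have b'l: "b' h (f i) < m" using fh' h fi unfolding fin_hset_def by blast
    have "f (b h i) = inv_into {..<m} e' (a h (e i))" unfolding f_def using eq h i by simp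
    also have "\<dots> = inv_into {..<m} e' (e' (b' h (f i)))" using eq' h fi efi by simp
    also have "\<dots> = b' h (f i)" using e' b'l by (simp add: bij_betw_inv_into_left)
    finally show "f (b h i) = b' h (f i)" .
  qed
  thus ?thesis using IS_iso[OF Fb] fh' bf nm by blast
qed

lemma Fset_iso:
  assumes "Fset G F H L a" and f: "bij_betw f L L'" and eq: "\<forall>h\<in>H. \<forall>x\<in>L. f (a h x) = a' h (f x)"
  shows "Fset G F H L' a'"
proof -
  obtain n b e where e: "bij_betw e {..<n} L" and Fb: "F H n b" and eqe: "\<forall>h\<in>H. \<forall>i<n. e (b h i) = a h (e i)"
    using assms(1) unfolding Fset_def by blast
  have "bij_betw (f \<circ> e) {..<n} L'" using e f by (rule bij_betw_trans)
  moreover have "\<forall>h\<in>H. \<forall>i<n. (f \<circ> e) (b h i) = a' h ((f \<circ> e) i)"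
    using eqe eq e by (auto simp: bij_betw_def)
  ultimately show ?thesis unfolding Fset_def using Fb by blast
qed

lemma finite_enum: "finite S \<Longrightarrow> \<exists>e. bij_betw e {..<card S} S"
  using ex_bij_betw_nat_finite by (metis atLeast0LessThan)

lemma Fset_sub:
  assumes Fs: "Fset G F H L a" and S: "S \<subseteq> L"
    and inv: "\<forall>h\<in>H. \<forall>x\<in>S. a h x \<in> S"
  shows "Fset G F H S a"
proof -
  obtain n b e where e: "bij_betw e {..<n} L" and Fb: "F H n b" and eq: "\<forall>h\<in>H. \<forall>i<n. e (b h i) = a h (e i)"
    using Fs unfolding Fset_def by blast
  have aL: "actL G H L a" and fL: "finite L" using Fset_actL[OF Fs] by auto
  have aS: "actL G H S a" using aL inv S unfolding actL_def by blast
  obtain eS where eS: "bij_betw eS {..<card S} S" using finite_enum fL S by (meson finite_subset)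
  define m where "m = card S"
  define bS where "bS = (\<lambda>h i. inv_into {..<m} eS (a h (eS i)))"
  have fS: "fin_hset G H m bS" and eqS: "\<forall>h\<in>H. \<forall>i<m. eS (bS h i) = a h (eS i)"
    using induced_fin_hset[OF aS, of eS m] eS unfolding m_def bS_def by auto
  define f where "f = inv_into {..<n} e \<circ> eS"
  have eSi: "\<And>i. i < m \<Longrightarrow> eS i \<in> L" using eS S unfolding m_def by (auto simp: bij_betw_def)
  have injf: "inj_on f {..<m}" unfolding f_def using eS e S m_def
    by (metis bij_betw_def bij_betw_inv_into comp_inj_on inj_on_subset bij_betw_imp_surj_on image_subset_iff lessThan_iff eSi)
  have imf: "f ` {..<m} \<subseteq> {..<n}" unfolding f_def using eSi e
    by (auto simp: bij_betw_def) (metis inv_into_into lessThan_iff)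
  have "equivariant H m bS b f" unfolding equivariant_def
  proof (intro ballI allI impI)
    fix h i assume h: "h \<in> H" and i: "i < m"
    have fi: "f i < n" using imf i by auto
    have efi: "e (f i) = eS i" unfolding f_def using e eSi i by (auto simp: bij_betw_inv_into_right)
    have bl: "b h (f i) < n" using IS_fin[OF Fb] h fi unfolding fin_hset_def by blast
    have "f (bS h i) = inv_into {..<n} e (a h (eS i))" unfolding f_def using eqS h i by simp
    also have "\<dots> = inv_into {..<n} e (e (b h (f i)))" using eq h fi efi by simp
    also have "\<dots> = b h (f i)" using e bl by (simp add: bij_betw_inv_into_left)
    finally show "f (bS h i) = b h (f i)" .
  qed
  hence "F H m bS" using IS_sub[OF Fb fS injf imf] by blast
  thus ?thesis unfolding Fset_def using eS eqS m_def by blast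
qed

lemma Fset_triv:
  assumes sg: "subgroup H G" and fin: "finite L"
    and tr: "\<forall>h\<in>H. \<forall>x\<in>L. a h x = x"
  shows "Fset G F H L a"
proof -
  obtain e where e: "bij_betw e {..<card L} L" using finite_enum fin by blast
  have "\<forall>h\<in>H. \<forall>i<card L. e i = a h (e i)" using tr e by (metis bij_betw_apply lessThan_iff)
  thus ?thesis unfolding Fset_def using e IS_triv[OF sg] by blast
qed

lemma Fset_restrict:
  assumes "Fset G F H L a" "subgroup K G" "K \<subseteq> H"
  shows "Fset G F K L a"
  using assms unfolding Fset_def by (meson IS_restr subsetD)

lemma Fset_union:
  assumes A: "Fset G F H A a" and B: "Fset G F H B a" and d: "A \<inter> B = {}"
  shows "Fset G F H (A \<union> B) a"
proof -
  obtain n b e where e: "bij_betw e {..<n} A" and Fb: "F H n b" and eq: "\<forall>h\<in>H. \<forall>i<n. e (b h i) = a h (e i)"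
    using A unfolding Fset_def by blast
  obtain m c f where f: "bij_betw f {..<m} B" and Fc: "F H m c" and eqf: "\<forall>h\<in>H. \<forall>i<m. f (c h i) = a h (f i)"
    using B unfolding Fset_def by blast
  have fb: "fin_hset G H n b" using IS_fin[OF Fb] .
  have fc: "fin_hset G H m c" using IS_fin[OF Fc] .
  define k where "k = (\<lambda>i. if i < n then e i else f (i - n))"
  define bc where "bc = (\<lambda>h i. if i < n then b h i else n + c h (i - n))"
  have "bij_betw k {..<n+m} (A \<union> B)"
  proof -
    have 1: "bij_betw k {..<n} A" using e unfolding k_def by (rule bij_betw_cong[THEN iffD1, rotated]) auto
    have "bij_betw (\<lambda>i. i - n) {n..<n+m} {..<m}"
      by (rule bij_betw_byWitness[where f'="\<lambda>i. i + n"]) auto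
    hence "bij_betw (f \<circ> (\<lambda>i. i - n)) {n..<n+m} B" using f by (rule bij_betw_trans)
    hence 2: "bij_betw k {n..<n+m} B" unfolding k_def by (rule bij_betw_cong[THEN iffD1, rotated]) auto
    have "bij_betw k ({..<n} \<union> {n..<n+m}) (A \<union> B)" using bij_betw_combine[OF 1 2 d] .
    moreover have "{..<n} \<union> {n..<n+m} = {..<n+m}" by auto
    ultimately show ?thesis by simp
  qed
  moreover have "\<forall>h\<in>H. \<forall>i<n+m. k (bc h i) = a h (k i)"
  proof (intro ballI allI impI)
    fix h i assume h: "h \<in> H" and i: "i < n + m"
    show "k (bc h i) = a h (k i)"
    proof (cases "i < n")
      case True
      have "b h i < n" using fb h True unfolding fin_hset_def by blast
      thus ?thesis using True eq h unfolding k_def bc_def by simp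
    next
      case False
      have "c h (i - n) < m" using fc h False i unfolding fin_hset_def by auto
      thus ?thesis using False eqf h i unfolding k_def bc_def by simp
    qed
  qed
  moreover have "F H (n+m) bc" unfolding bc_def using IS_coprod[OF Fb Fc] .
  ultimately show ?thesis unfolding Fset_def by blast
qed

end


sublocale isys \<subseteq> G: group G by (rule grp)

context isys begin

lemma sg_inv: "subgroup H G \<Longrightarrow> h \<in> H \<Longrightarrow> inv\<^bsub>G\<^esub> h \<in> H"
  by (rule subgroup.m_inv_closed)
lemma sg_mult: "subgroup H G \<Longrightarrow> h \<in> H \<Longrightarrow> k \<in> H \<Longrightarrow> h \<otimes>\<^bsub>G\<^esub> k \<in> H"
  by (rule subgroup.m_closed)
lemma sg_one: "subgroup H G \<Longrightarrow> \<one>\<^bsub>G\<^esub> \<in> H"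
  by (rule subgroup.one_closed)
lemma sg_car: "subgroup H G \<Longrightarrow> h \<in> H \<Longrightarrow> h \<in> carrier G"
  using subgroup.subset by blast

lemma actL_sub: "actL G H L a \<Longrightarrow> S \<subseteq> L \<Longrightarrow> (\<forall>h\<in>H. \<forall>x\<in>S. a h x \<in> S) \<Longrightarrow> actL G H S a"
  unfolding actL_def by blast

lemma actL_inv:
  assumes aL: "actL G H L a" and h: "h \<in> H" and x: "x \<in> L"
  shows "a (inv\<^bsub>G\<^esub> h) (a h x) = x" "a h (a (inv\<^bsub>G\<^esub> h) x) = x"
proof -
  have sg: "subgroup H G" and o: "\<forall>x\<in>L. a \<one>\<^bsub>G\<^esub> x = x"
    and hm: "\<forall>h\<in>H. \<forall>k\<in>H. \<forall>x\<in>L. a (h \<otimes>\<^bsub>G\<^esub> k) x = a h (a k x)"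
    using aL unfolding actL_def by auto
  have hc: "h \<in> carrier G" using sg_car[OF sg h] .
  have ih: "inv\<^bsub>G\<^esub> h \<in> H" using sg_inv[OF sg h] .
  have "a (inv\<^bsub>G\<^esub> h) (a h x) = a (inv\<^bsub>G\<^esub> h \<otimes>\<^bsub>G\<^esub> h) x" using hm[rule_format, OF ih h x] by simp
  also have "\<dots> = x" using hc o x by simp
  finally show "a (inv\<^bsub>G\<^esub> h) (a h x) = x" .
  have "a h (a (inv\<^bsub>G\<^esub> h) x) = a (h \<otimes>\<^bsub>G\<^esub> inv\<^bsub>G\<^esub> h) x" using hm[rule_format, OF h ih x] by simp
  also have "\<dots> = x" using hc o x by simp
  finally show "a h (a (inv\<^bsub>G\<^esub> h) x) = x" .
qed

lemma stab_subgroup: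
  assumes aL: "actL G H L a" and j: "j \<in> L"
  shows "subgroup {h \<in> H. a h j = j} G"
proof -
  have sg: "subgroup H G" and o: "\<forall>x\<in>L. a \<one>\<^bsub>G\<^esub> x = x"
    and hm: "\<forall>h\<in>H. \<forall>k\<in>H. \<forall>x\<in>L. a (h \<otimes>\<^bsub>G\<^esub> k) x = a h (a k x)"
    using aL unfolding actL_def by auto
  show ?thesis
  proof (rule G.subgroupI)
    show "{h \<in> H. a h j = j} \<subseteq> carrier G" using sg_car[OF sg] by blast
    have "\<one>\<^bsub>G\<^esub> \<in> {h \<in> H. a h j = j}" using sg_one[OF sg] o j by simp
    thus "{h \<in> H. a h j = j} \<noteq> {}" by blast
  next
    fix h assume h: "h \<in> {h \<in> H. a h j = j}"
    have hH: "h \<in> H" using h by simp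
    have ih: "inv\<^bsub>G\<^esub> h \<in> H" using sg_inv[OF sg hH] .
    have "a (inv\<^bsub>G\<^esub> h) j = a (inv\<^bsub>G\<^esub> h) (a h j)" using h by simp
    also have "\<dots> = j" using actL_inv(1)[OF aL hH j] .
    finally show "inv\<^bsub>G\<^esub> h \<in> {h \<in> H. a h j = j}" using ih by simp
  next
    fix h k assume h: "h \<in> {h \<in> H. a h j = j}" and k: "k \<in> {h \<in> H. a h j = j}"
    have "a (h \<otimes>\<^bsub>G\<^esub> k) j = a h (a k j)" using hm h k j by blast
    moreover have "h \<otimes>\<^bsub>G\<^esub> k \<in> H" using sg_mult[OF sg] h k by blast
    ultimately show "h \<otimes>\<^bsub>G\<^esub> k \<in> {h \<in> H. a h j = j}" using h k by simp
  qed
qed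

lemma Fset_orbit:
  assumes FO: "Fset G F H Ob a" and j0: "j0 \<in> Ob" and tr: "\<forall>y\<in>Ob. \<exists>h\<in>H. a h j0 = y"
  shows "\<exists>n b e i0. bij_betw e {..<n} Ob \<and> F H n b \<and> (\<forall>h\<in>H. \<forall>i<n. e (b h i) = a h (e i))
     \<and> i0 < n \<and> e i0 = j0 \<and> fin_hset G H n b \<and> {h\<in>H. b h i0 = i0} = {h\<in>H. a h j0 = j0}
     \<and> (\<forall>j<n. \<exists>h\<in>H. b h i0 = j)"
proof -
  obtain n b e where e: "bij_betw e {..<n} Ob" and Fb: "F H n b" and eq: "\<forall>h\<in>H. \<forall>i<n. e (b h i) = a h (e i)"
    using FO unfolding Fset_def by blast
  have fh: "fin_hset G H n b" using IS_fin[OF Fb] .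
  define i0 where "i0 = inv_into {..<n} e j0"
  have i0: "i0 < n" "e i0 = j0" unfolding i0_def using e j0
    by (auto simp: bij_betw_def inv_into_into f_inv_into_f)
  have inj: "\<And>i j. i < n \<Longrightarrow> j < n \<Longrightarrow> e i = e j \<Longrightarrow> i = j" using e
    by (auto simp: bij_betw_def inj_on_def)
  have bl: "\<And>h i. h \<in> H \<Longrightarrow> i < n \<Longrightarrow> b h i < n" using fh unfolding fin_hset_def by blast
  have "\<forall>h\<in>H. (b h i0 = i0) = (a h j0 = j0)"
  proof
    fix h assume h: "h \<in> H"
    have E: "e (b h i0) = a h j0" using eq h i0 by simp
    show "(b h i0 = i0) = (a h j0 = j0)"
    proof
      assume "b h i0 = i0" thus "a h j0 = j0" using E i0 by simp
    next
      assume "a h j0 = j0" hence "e (b h i0) = e i0" using E i0 by simp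
      thus "b h i0 = i0" using inj[OF bl[OF h i0(1)] i0(1)] by blast
    qed
  qed
  hence "{h\<in>H. b h i0 = i0} = {h\<in>H. a h j0 = j0}" by blast
  moreover have "\<forall>j<n. \<exists>h\<in>H. b h i0 = j"
  proof (intro allI impI)
    fix j assume j: "j < n"
    have "e j \<in> Ob" using e j by (auto simp: bij_betw_def)
    then obtain h where h: "h \<in> H" "a h j0 = e j" using tr by blast
    hence "e (b h i0) = e j" using eq i0 by simp
    thus "\<exists>h\<in>H. b h i0 = j" using inj[OF bl[OF h(1) i0(1)] j] h by blast
  qed
  ultimately show ?thesis using e Fb eq i0 fh by blast
qed

lemma orbit_wd:
  assumes fc: "fin_hset G H p c" and i0: "i0 < p" and sc: "{h\<in>H. c h i0 = i0} = K"
    and fd: "fin_hset G H k d" and i1: "i1 < k" and sd: "{h\<in>H. d h i1 = i1} = K"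
    and h: "h \<in> H" and h': "h' \<in> H" and eq: "c h i0 = c h' i0"
  shows "d h i1 = d h' i1"
proof -
  have sg: "subgroup H G" using fc unfolding fin_hset_def by blast
  have hc: "h \<in> carrier G" "h' \<in> carrier G" using sg_car[OF sg] h h' by blast+
  have ih: "inv\<^bsub>G\<^esub> h \<in> H" using sg_inv[OF sg h] .
  have m: "inv\<^bsub>G\<^esub> h \<otimes>\<^bsub>G\<^esub> h' \<in> H" using sg_mult[OF sg ih h'] .
  have "c (inv\<^bsub>G\<^esub> h \<otimes>\<^bsub>G\<^esub> h') i0 = c (inv\<^bsub>G\<^esub> h) (c h' i0)" using fc ih h' i0 unfolding fin_hset_def by blast
  also have "\<dots> = c (inv\<^bsub>G\<^esub> h) (c h i0)" using eq by simp
  also have "\<dots> = c (inv\<^bsub>G\<^esub> h \<otimes>\<^bsub>G\<^esub> h) i0" using fc ih h i0 unfolding fin_hset_def by simp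
  also have "\<dots> = i0" using fc i0 hc unfolding fin_hset_def by simp
  finally have "inv\<^bsub>G\<^esub> h \<otimes>\<^bsub>G\<^esub> h' \<in> K" using sc m by blast
  hence dk: "d (inv\<^bsub>G\<^esub> h \<otimes>\<^bsub>G\<^esub> h') i1 = i1" using sd by blast
  have "h \<otimes>\<^bsub>G\<^esub> (inv\<^bsub>G\<^esub> h \<otimes>\<^bsub>G\<^esub> h') = h'" using hc by (simp add: G.m_assoc[symmetric])
  hence "d h' i1 = d (h \<otimes>\<^bsub>G\<^esub> (inv\<^bsub>G\<^esub> h \<otimes>\<^bsub>G\<^esub> h')) i1" by simp
  also have "\<dots> = d h (d (inv\<^bsub>G\<^esub> h \<otimes>\<^bsub>G\<^esub> h') i1)" using fd h m i1 unfolding fin_hset_def by blast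
  also have "\<dots> = d h i1" using dk by simp
  finally show ?thesis by simp
qed

lemma orbit_iso:
  assumes fc: "fin_hset G H p c" and i0: "i0 < p" and sc: "{h\<in>H. c h i0 = i0} = K"
    and tc: "\<forall>j<p. \<exists>h\<in>H. c h i0 = j"
    and fd: "fin_hset G H k d" and i1: "i1 < k" and sd: "{h\<in>H. d h i1 = i1} = K"
    and td: "\<forall>j<k. \<exists>h\<in>H. d h i1 = j"
  shows "\<exists>f. bij_betw f {..<p} {..<k} \<and> (\<forall>h\<in>H. \<forall>j<p. f (c h j) = d h (f j))"
proof -
  have sg: "subgroup H G" using fc unfolding fin_hset_def by blast
  define f where "f j = d (SOME h. h \<in> H \<and> c h i0 = j) i1" for j
  have fc0: "f (c h i0) = d h i1" if h: "h \<in> H" for h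
  proof -
    have "\<exists>h'. h' \<in> H \<and> c h' i0 = c h i0" using h by blast
    hence s: "(SOME h'. h' \<in> H \<and> c h' i0 = c h i0) \<in> H \<and> c (SOME h'. h' \<in> H \<and> c h' i0 = c h i0) i0 = c h i0"
      by (rule someI_ex)
    show ?thesis unfolding f_def using orbit_wd[OF fc i0 sc fd i1 sd _ h] s by blast
  qed
  have wd2: "\<And>h h'. h \<in> H \<Longrightarrow> h' \<in> H \<Longrightarrow> d h i1 = d h' i1 \<Longrightarrow> c h i0 = c h' i0"
    using orbit_wd[OF fd i1 sd fc i0 sc] by blast
  have "bij_betw f {..<p} {..<k}" unfolding bij_betw_def
  proof (intro conjI)
    show "inj_on f {..<p}"
    proof (rule inj_onI)
      fix x y assume x: "x \<in> {..<p}" and y: "y \<in> {..<p}" and e: "f x = f y"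
      obtain hx where hx: "hx \<in> H" "c hx i0 = x" using tc x by auto
      obtain hy where hy: "hy \<in> H" "c hy i0 = y" using tc y by auto
      have "d hx i1 = d hy i1" using e fc0 hx hy by metis
      thus "x = y" using wd2 hx hy by metis
    qed
    show "f ` {..<p} = {..<k}"
    proof
      show "f ` {..<p} \<subseteq> {..<k}"
      proof
        fix y assume "y \<in> f ` {..<p}"
        then obtain x where x: "x < p" "y = f x" by auto
        obtain hx where hx: "hx \<in> H" "c hx i0 = x" using tc x by auto
        show "y \<in> {..<k}" using fc0[OF hx(1)] hx x fd i1 unfolding fin_hset_def by auto
      qed
      show "{..<k} \<subseteq> f ` {..<p}"
      proof
        fix y assume "y \<in> {..<k}"
        then obtain h where h: "h \<in> H" "d h i1 = y" using td by auto
        have "c h i0 < p" using fc h i0 unfolding fin_hset_def by blast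
        thus "y \<in> f ` {..<p}" using fc0[OF h(1)] h by (metis image_eqI lessThan_iff)
      qed
    qed
  qed
  moreover have "\<forall>h\<in>H. \<forall>j<p. f (c h j) = d h (f j)"
  proof (intro ballI allI impI)
    fix h j assume h: "h \<in> H" and j: "j < p"
    obtain hj where hj: "hj \<in> H" "c hj i0 = j" using tc j by auto
    have m: "h \<otimes>\<^bsub>G\<^esub> hj \<in> H" using sg_mult[OF sg h hj(1)] .
    have "c h j = c (h \<otimes>\<^bsub>G\<^esub> hj) i0" using fc h hj i0 unfolding fin_hset_def by auto
    hence "f (c h j) = d (h \<otimes>\<^bsub>G\<^esub> hj) i1" using fc0[OF m] by simp
    also have "\<dots> = d h (d hj i1)" using fd h hj i1 unfolding fin_hset_def by blast
    also have "\<dots> = d h (f j)" using fc0[OF hj(1)] hj by simp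
    finally show "f (c h j) = d h (f j)" .
  qed
  ultimately show ?thesis by blast
qed



lemma Fset_SI:
  assumes FO: "Fset G F H Ob \<rho>" and j0: "j0 \<in> Ob" and tr: "\<forall>y\<in>Ob. \<exists>h\<in>H. \<rho> h j0 = y"
    and aX: "actL G H X a" and finX: "finite X"
    and cover: "X = (\<Union>j\<in>Ob. Lf j)"
    and disj: "\<forall>j\<in>Ob. \<forall>j'\<in>Ob. j \<noteq> j' \<longrightarrow> Lf j \<inter> Lf j' = {}"
    and eqv: "\<forall>h\<in>H. \<forall>j\<in>Ob. \<forall>y\<in>Lf j. a h y \<in> Lf (\<rho> h j)"
    and fib: "Fset G F {h\<in>H. \<rho> h j0 = j0} (Lf j0) a"
  shows "Fset G F H X a"
proof -
  have aO: "actL G H Ob \<rho>" using Fset_actL[OF FO] by blast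
  obtain p c e i0 where e: "bij_betw e {..<p} Ob" and Fc: "F H p c"
    and eqc: "\<forall>h\<in>H. \<forall>i<p. e (c h i) = \<rho> h (e i)" and i0: "i0 < p" "e i0 = j0"
    and fc: "fin_hset G H p c" and stc: "{h\<in>H. c h i0 = i0} = {h\<in>H. \<rho> h j0 = j0}"
    and trc: "\<forall>j<p. \<exists>h\<in>H. c h i0 = j"
    using Fset_orbit[OF FO j0 tr] by blast
  define K where "K = {h\<in>H. \<rho> h j0 = j0}"
  obtain m b eF where eF: "bij_betw eF {..<m} (Lf j0)" and Fb: "F K m b"
    and eqF: "\<forall>h\<in>K. \<forall>i<m. eF (b h i) = a h (eF i)"
    using fib unfolding Fset_def K_def by blast
  define n where "n = card X"
  obtain eX where eX: "bij_betw eX {..<n} X" using finite_enum[OF finX] unfolding n_def by blast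
  define x where "x = (\<lambda>h i. inv_into {..<n} eX (a h (eX i)))"
  have fx: "fin_hset G H n x" and eqX: "\<forall>h\<in>H. \<forall>i<n. eX (x h i) = a h (eX i)"
    using induced_fin_hset[OF aX eX] unfolding x_def by auto
  define \<pi>X where "\<pi>X y = (THE j. j \<in> Ob \<and> y \<in> Lf j)" for y
  have uniq: "\<And>y j. j \<in> Ob \<Longrightarrow> y \<in> Lf j \<Longrightarrow> \<pi>X y = j"
  proof -
    fix y j assume j: "j \<in> Ob" and y: "y \<in> Lf j"
    show "\<pi>X y = j" unfolding \<pi>X_def
    proof (rule the_equality)
      show "j \<in> Ob \<and> y \<in> Lf j" using j y by blast
      fix j' assume "j' \<in> Ob \<and> y \<in> Lf j'"
      thus "j' = j" using disj j y by blast
    qed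
  qed
  have piX: "\<And>y. y \<in> X \<Longrightarrow> \<pi>X y \<in> Ob \<and> y \<in> Lf (\<pi>X y)"
  proof -
    fix y assume "y \<in> X"
    then obtain j where "j \<in> Ob" "y \<in> Lf j" using cover by blast
    thus "\<pi>X y \<in> Ob \<and> y \<in> Lf (\<pi>X y)" using uniq by simp
  qed
  have eXi: "\<And>i. i < n \<Longrightarrow> eX i \<in> X" using eX by (auto simp: bij_betw_def)
  have einv: "\<And>j. j \<in> Ob \<Longrightarrow> inv_into {..<p} e j < p \<and> e (inv_into {..<p} e j) = j"
    using e by (auto simp: bij_betw_def inv_into_into f_inv_into_f)
  have einv2: "\<And>i. i < p \<Longrightarrow> inv_into {..<p} e (e i) = i"
    using e by (simp add: bij_betw_inv_into_left)
  define \<pi> where "\<pi> i = inv_into {..<p} e (\<pi>X (eX i))" for i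
  have pim: "\<pi> ` {..<n} \<subseteq> {..<p}" unfolding \<pi>_def using einv piX eXi by auto
  have rhoO: "\<And>h j. h \<in> H \<Longrightarrow> j \<in> Ob \<Longrightarrow> \<rho> h j \<in> Ob" using aO unfolding actL_def by blast
  have cl: "\<And>h i. h \<in> H \<Longrightarrow> i < p \<Longrightarrow> c h i < p" using fc unfolding fin_hset_def by blast
  have "equivariant H n x c \<pi>" unfolding equivariant_def
  proof (intro ballI allI impI)
    fix h i assume h: "h \<in> H" and i: "i < n"
    define y where "y = eX i"
    define j where "j = \<pi>X y"
    have jO: "j \<in> Ob" and yj: "y \<in> Lf j" using piX eXi i unfolding y_def j_def by auto
    have "eX (x h i) = a h y" using eqX h i unfolding y_def by simp
    moreover have "a h y \<in> Lf (\<rho> h j)" using eqv h jO yj by blast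
    ultimately have 1: "\<pi>X (eX (x h i)) = \<rho> h j" using uniq rhoO h jO by simp
    have ij: "inv_into {..<p} e j < p" "e (inv_into {..<p} e j) = j" using einv jO by auto
    have "e (c h (inv_into {..<p} e j)) = \<rho> h j" using eqc h ij by simp
    hence "c h (inv_into {..<p} e j) = inv_into {..<p} e (\<rho> h j)"
      using einv2 cl[OF h ij(1)] by metis
    thus "\<pi> (x h i) = c h (\<pi> i)" unfolding \<pi>_def using 1 unfolding j_def y_def by simp
  qed
  note eqpi = this
  define f where "f = inv_into {..<n} eX \<circ> eF"
  have L0X: "Lf j0 \<subseteq> X" using cover j0 by blast
  have fibset0: "\<forall>i<n. (\<pi> i = i0) = (eX i \<in> Lf j0)"
  proof (intro allI impI)
    fix i assume i: "i < n"
    have pO: "\<pi>X (eX i) \<in> Ob" "eX i \<in> Lf (\<pi>X (eX i))" using piX eXi i by auto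
    have "(\<pi> i = i0) = (\<pi>X (eX i) = j0)"
    proof
      assume "\<pi> i = i0"
      hence "e (\<pi> i) = j0" using i0 by simp
      thus "\<pi>X (eX i) = j0" unfolding \<pi>_def using einv pO by simp
    next
      assume "\<pi>X (eX i) = j0"
      thus "\<pi> i = i0" unfolding \<pi>_def using einv2[OF i0(1)] i0(2) by metis
    qed
    also have "\<dots> = (eX i \<in> Lf j0)" using uniq j0 pO by metis
    finally show "(\<pi> i = i0) = (eX i \<in> Lf j0)" .
  qed
  have fibset: "{i. i < n \<and> \<pi> i = i0} = {i. i < n \<and> eX i \<in> Lf j0}" using fibset0 by blast
  have "bij_betw (inv_into {..<n} eX) (Lf j0) {i. i < n \<and> eX i \<in> Lf j0}"
  proof (rule bij_betw_inv_into_subset[OF eX])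
    show "{i. i < n \<and> eX i \<in> Lf j0} \<subseteq> {..<n}" by auto
    show "eX ` {i. i < n \<and> eX i \<in> Lf j0} = Lf j0"
    proof
      show "eX ` {i. i < n \<and> eX i \<in> Lf j0} \<subseteq> Lf j0" by auto
      show "Lf j0 \<subseteq> eX ` {i. i < n \<and> eX i \<in> Lf j0}"
      proof
        fix y assume y: "y \<in> Lf j0"
        hence "y \<in> X" using L0X by blast
        then obtain i where "i < n" "eX i = y" using eX by (auto simp: bij_betw_def)
        thus "y \<in> eX ` {i. i < n \<and> eX i \<in> Lf j0}" using y by blast
      qed
    qed
  qed
  hence bf: "bij_betw f {..<m} {i. i < n \<and> \<pi> i = i0}" unfolding f_def fibset
    using eF by (rule bij_betw_trans[rotated])
  have KH: "K \<subseteq> H" unfolding K_def by blast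
  have eXinv: "\<And>y. y \<in> X \<Longrightarrow> eX (inv_into {..<n} eX y) = y" using eX by (simp add: bij_betw_inv_into_right)
  have eFi: "\<And>i. i < m \<Longrightarrow> eF i \<in> Lf j0" using eF by (auto simp: bij_betw_def)
  have "equivariant K m b x f" unfolding equivariant_def
  proof (intro ballI allI impI)
    fix h i assume h: "h \<in> K" and i: "i < m"
    have "f (b h i) = inv_into {..<n} eX (a h (eF i))" unfolding f_def using eqF h i by simp
    also have "\<dots> = x h (f i)" unfolding x_def f_def using eXinv eFi[OF i] L0X by auto
    finally show "f (b h i) = x h (f i)" .
  qed
  hence "F H n x" using IS_si[OF fc Fc i0(1) stc trc Fb[unfolded K_def] fx pim eqpi bf[unfolded K_def]]
    unfolding K_def by blast
  thus ?thesis unfolding Fset_def using eX eqX by blast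
qed

lemma Fset_DI:
  assumes "Fset G F H P \<rho>" "actL G H L a" "finite L" "L = (\<Union>j\<in>P. Lf j)"
    "\<forall>j\<in>P. \<forall>j'\<in>P. j \<noteq> j' \<longrightarrow> Lf j \<inter> Lf j' = {}"
    "\<forall>h\<in>H. \<forall>j\<in>P. \<forall>y\<in>Lf j. a h y \<in> Lf (\<rho> h j)"
    "\<forall>j\<in>P. Fset G F {h\<in>H. \<rho> h j = j} (Lf j) a"
  shows "Fset G F H L a"
  using assms
proof (induction "card P" arbitrary: P L rule: less_induct)
  case less
  note FP = less.prems(1) and aL = less.prems(2) and finL = less.prems(3) and cov = less.prems(4)
    and disj = less.prems(5) and eqv = less.prems(6) and fib = less.prems(7)
  have aP: "actL G H P \<rho>" and finP: "finite P" using Fset_actL[OF FP] by auto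
  have sg: "subgroup H G" using aP unfolding actL_def by blast
  show ?case
  proof (cases "P = {}")
    case True
    hence "L = {}" using cov by simp
    thus ?thesis using Fset_triv[OF sg] by simp
  next
    case False
    then obtain j0 where j0: "j0 \<in> P" by blast
    define Ob where "Ob = (\<lambda>h. \<rho> h j0) ` H"
    have rP: "\<And>h j. h \<in> H \<Longrightarrow> j \<in> P \<Longrightarrow> \<rho> h j \<in> P" using aP unfolding actL_def by blast
    have rhm: "\<And>h k j. h \<in> H \<Longrightarrow> k \<in> H \<Longrightarrow> j \<in> P \<Longrightarrow> \<rho> (h \<otimes>\<^bsub>G\<^esub> k) j = \<rho> h (\<rho> k j)"
      using aP unfolding actL_def by blast
    have r1: "\<rho> \<one>\<^bsub>G\<^esub> j0 = j0" using aP j0 unfolding actL_def by blast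
    have ObP: "Ob \<subseteq> P" unfolding Ob_def using rP j0 by blast
    have j0O: "j0 \<in> Ob" unfolding Ob_def using r1 sg_one[OF sg] by (metis image_eqI)
    have Obinv: "\<forall>h\<in>H. \<forall>y\<in>Ob. \<rho> h y \<in> Ob"
    proof (intro ballI)
      fix h y assume h: "h \<in> H" and "y \<in> Ob"
      then obtain k where k: "k \<in> H" "y = \<rho> k j0" unfolding Ob_def by blast
      have "\<rho> h y = \<rho> (h \<otimes>\<^bsub>G\<^esub> k) j0" using rhm h k j0 by simp
      thus "\<rho> h y \<in> Ob" unfolding Ob_def using sg_mult[OF sg h k(1)] by blast
    qed
    define P' where "P' = P - Ob"
    have P'inv: "\<forall>h\<in>H. \<forall>y\<in>P'. \<rho> h y \<in> P'"
    proof (intro ballI)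
      fix h y assume h: "h \<in> H" and y: "y \<in> P'"
      have yP: "y \<in> P" using y unfolding P'_def by blast
      show "\<rho> h y \<in> P'"
      proof (rule ccontr)
        assume "\<rho> h y \<notin> P'"
        hence "\<rho> h y \<in> Ob" using rP[OF h yP] unfolding P'_def by blast
        hence "\<rho> (inv\<^bsub>G\<^esub> h) (\<rho> h y) \<in> Ob" using Obinv sg_inv[OF sg h] by blast
        hence "y \<in> Ob" using actL_inv(1)[OF aP h yP] by simp
        thus False using y unfolding P'_def by blast
      qed
    qed
    have FO: "Fset G F H Ob \<rho>" using Fset_sub[OF FP ObP Obinv] .
    have FP': "Fset G F H P' \<rho>" using Fset_sub[OF FP _ P'inv] unfolding P'_def by blast
    define LO where "LO = (\<Union>j\<in>Ob. Lf j)"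
    define L' where "L' = (\<Union>j\<in>P'. Lf j)"
    have LU: "L = LO \<union> L'" unfolding LO_def L'_def cov P'_def using ObP by blast
    have Ld: "LO \<inter> L' = {}"
    proof (rule ccontr)
      assume "LO \<inter> L' \<noteq> {}"
      then obtain y where "y \<in> LO" "y \<in> L'" by blast
      then obtain j j' where jj: "j \<in> Ob" "y \<in> Lf j" "j' \<in> P'" "y \<in> Lf j'" unfolding LO_def L'_def by blast
      have "j \<noteq> j'" "j \<in> P" "j' \<in> P" using jj ObP unfolding P'_def by auto
      thus False using disj jj by blast
    qed
    have LOL: "LO \<subseteq> L" and L'L: "L' \<subseteq> L" using LU by auto
    have "P' \<subset> P" using j0 j0O unfolding P'_def by blast
    hence cardlt: "card P' < card P" using psubset_card_mono[OF finP] by blast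
    have aL': "actL G H L' a"
    proof (rule actL_sub[OF aL L'L])
      show "\<forall>h\<in>H. \<forall>x\<in>L'. a h x \<in> L'"
      proof (intro ballI)
        fix h x assume h: "h \<in> H" and "x \<in> L'"
        then obtain j where j: "j \<in> P'" "x \<in> Lf j" unfolding L'_def by blast
        have "j \<in> P" using j unfolding P'_def by blast
        hence "a h x \<in> Lf (\<rho> h j)" using eqv h j by blast
        thus "a h x \<in> L'" unfolding L'_def using P'inv h j by blast
      qed
    qed
    have FL': "Fset G F H L' a"
    proof (rule less.hyps[OF cardlt FP' aL'])
      show "finite L'" using finL L'L by (rule finite_subset[rotated])
      show "L' = (\<Union>j\<in>P'. Lf j)" unfolding L'_def ..
      show "\<forall>j\<in>P'. \<forall>j'\<in>P'. j \<noteq> j' \<longrightarrow> Lf j \<inter> Lf j' = {}" using disj unfolding P'_def by blast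
      show "\<forall>h\<in>H. \<forall>j\<in>P'. \<forall>y\<in>Lf j. a h y \<in> Lf (\<rho> h j)" using eqv unfolding P'_def by blast
      show "\<forall>j\<in>P'. Fset G F {h \<in> H. \<rho> h j = j} (Lf j) a" using fib unfolding P'_def by blast
    qed
    have aLO: "actL G H LO a"
    proof (rule actL_sub[OF aL LOL])
      show "\<forall>h\<in>H. \<forall>x\<in>LO. a h x \<in> LO"
      proof (intro ballI)
        fix h x assume h: "h \<in> H" and "x \<in> LO"
        then obtain j where j: "j \<in> Ob" "x \<in> Lf j" unfolding LO_def by blast
        have "j \<in> P" using j ObP by blast
        hence "a h x \<in> Lf (\<rho> h j)" using eqv h j by blast
        thus "a h x \<in> LO" unfolding LO_def using Obinv h j by blast
      qed
    qed
    have FLO: "Fset G F H LO a"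
    proof (rule Fset_SI[OF FO j0O _ aLO])
      show "\<forall>y\<in>Ob. \<exists>h\<in>H. \<rho> h j0 = y" unfolding Ob_def by blast
      show "finite LO" using finL LOL by (rule finite_subset[rotated])
      show "LO = (\<Union>j\<in>Ob. Lf j)" unfolding LO_def ..
      show "\<forall>j\<in>Ob. \<forall>j'\<in>Ob. j \<noteq> j' \<longrightarrow> Lf j \<inter> Lf j' = {}" using disj ObP by blast
      show "\<forall>h\<in>H. \<forall>j\<in>Ob. \<forall>y\<in>Lf j. a h y \<in> Lf (\<rho> h j)" using eqv ObP by blast
      show "Fset G F {h \<in> H. \<rho> h j0 = j0} (Lf j0) a" using fib j0 by blast
    qed
    show ?thesis unfolding LU using Fset_union[OF FLO FL' Ld] .
  qed
qed

end

inductive Rt :: "'g monoid \<Rightarrow> 'i set \<Rightarrow> ('i \<Rightarrow> 'g set) \<Rightarrow> ('i \<Rightarrow> nat \<times> ('g \<Rightarrow> nat \<Rightarrow> nat))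
    \<Rightarrow> ('i, 'g) ftree \<Rightarrow> ('i, 'g) ftree \<Rightarrow> bool" for G I grp dat where
  RL: "Rt G I grp dat (Leaf j) (Leaf j)"
| RN: "\<lbrakk> nodes_ok G I dat (Node x g1 \<tau>1 ts1); nodes_ok G I dat (Node x g2 \<tau>2 ts2);
         h \<in> tag_grp G grp x; g2 = g1 \<otimes>\<^bsub>G\<^esub> h;
         \<forall>j<length ts1. Rt G I grp dat (ts2 ! \<tau>2 j) (ts1 ! \<tau>1 (tag_perm dat x h j)) \<rbrakk>
       \<Longrightarrow> Rt G I grp dat (Node x g1 \<tau>1 ts1) (Node x g2 \<tau>2 ts2)"

inductive_cases Rt_LeafE: "Rt G I grp dat (Leaf j) t"
inductive_cases Rt_NodeE: "Rt G I grp dat (Node x g \<tau> ts) t"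
inductive_cases Rt_NodeE2: "Rt G I grp dat s (Node x g \<tau> ts)"
inductive_cases nodes_ok_NodeE: "nodes_ok G I dat (Node x g \<tau> ts)"

lemma leaves_tact: "leaves (tact G g \<pi> t) = map \<pi> (leaves t)"
  by (induction t) (auto simp: map_concat intro!: arg_cong[where f=concat] map_cong)

locale smctx = isys +
  fixes ord :: "'g set \<times> 'g set \<Rightarrow> nat \<times> ('g \<Rightarrow> nat \<Rightarrow> nat)"
  assumes ordok: "\<forall>HK \<in> O_index G F. is_orbit G (fst HK) (snd HK) (fst (ord HK)) (snd (ord HK))"
begin

abbreviation "II \<equiv> O_index G F"
abbreviation "NO \<equiv> nodes_ok G II ord"
abbreviation "R \<equiv> Rt G II fst ord"

lemma tag_actL:
  assumes "tag_valid II x"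
  shows "actL G (tag_grp G fst x) {..<tag_ar ord x} (tag_perm ord x)"
proof (cases x)
  case Nul thus ?thesis unfolding actL_def using G.subgroup_self by simp
next
  case Bin thus ?thesis unfolding actL_def using G.subgroup_self by simp
next
  case (Ex i)
  hence i: "i \<in> II" using assms by simp
  have sg: "subgroup (fst i) G" using i unfolding O_index_def by auto
  have fh: "fin_hset G (fst i) (fst (ord i)) (snd (ord i))"
    using ordok i unfolding is_orbit_def by blast
  show ?thesis unfolding actL_def Ex using sg fh unfolding fin_hset_def
    by (auto simp: sg_mult[OF sg])
qed

lemma tag_perm_out: "j \<ge> tag_ar ord x \<Longrightarrow> tag_perm ord x h j = j"
  by (cases x) auto

lemma tag_permutes:
  assumes "tag_valid II x" "h \<in> tag_grp G fst x"
  shows "tag_perm ord x h permutes {..<tag_ar ord x}"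
proof (rule bij_imp_permutes)
  note aL = tag_actL[OF assms(1)]
  have sg: "subgroup (tag_grp G fst x) G" using aL unfolding actL_def by blast
  have ih: "inv\<^bsub>G\<^esub> h \<in> tag_grp G fst x" using sg_inv[OF sg assms(2)] .
  have cl: "\<And>h j. h \<in> tag_grp G fst x \<Longrightarrow> j < tag_ar ord x \<Longrightarrow> tag_perm ord x h j < tag_ar ord x"
    using aL unfolding actL_def by blast
  show "bij_betw (tag_perm ord x h) {..<tag_ar ord x} {..<tag_ar ord x}"
  proof (rule bij_betw_byWitness[where f'="tag_perm ord x (inv\<^bsub>G\<^esub> h)"])
    show "\<forall>a\<in>{..<tag_ar ord x}. tag_perm ord x (inv\<^bsub>G\<^esub> h) (tag_perm ord x h a) = a"
      using actL_inv(1)[OF aL assms(2)] by blast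
    show "\<forall>a\<in>{..<tag_ar ord x}. tag_perm ord x h (tag_perm ord x (inv\<^bsub>G\<^esub> h) a) = a"
      using actL_inv(2)[OF aL assms(2)] by blast
    show "tag_perm ord x h ` {..<tag_ar ord x} \<subseteq> {..<tag_ar ord x}" using cl[OF assms(2)] by auto
    show "tag_perm ord x (inv\<^bsub>G\<^esub> h) ` {..<tag_ar ord x} \<subseteq> {..<tag_ar ord x}" using cl[OF ih] by auto
  qed
  show "\<And>j. j \<notin> {..<tag_ar ord x} \<Longrightarrow> tag_perm ord x h j = j" using tag_perm_out by simp
qed

lemma NO_node0: "NO (Node x g \<tau> ts) \<Longrightarrow> tag_valid II x \<and> g \<in> carrier G \<and> \<tau> permutes {..<tag_ar ord x}
    \<and> length ts = tag_ar ord x \<and> (\<forall>t\<in>set ts. NO t)"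
  by (erule nodes_ok_NodeE) blast

lemma NO_node:
  assumes "NO (Node x g \<tau> ts)"
  shows "tag_valid II x" "g \<in> carrier G" "\<tau> permutes {..<tag_ar ord x}"
    "length ts = tag_ar ord x" "\<forall>t\<in>set ts. NO t"
  using NO_node0[OF assms] by blast+

lemma Rt_ok: "R s t \<Longrightarrow> NO s \<and> NO t"
  by (induction rule: Rt.induct) (auto intro: nodes_ok.leaf)

lemma perm_nth_in:
  assumes "\<tau> permutes {..<length ts}" "j < length ts"
  shows "ts ! \<tau> j \<in> set ts" "\<tau> j < length ts"
proof -
  show "\<tau> j < length ts" using permutes_in_image[OF assms(1)] assms(2) by simp
  thus "ts ! \<tau> j \<in> set ts" by simp
qed

lemma Rt_refl: "NO t \<Longrightarrow> R t t"
proof (induction t rule: nodes_ok.induct)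
  case (leaf j) show ?case by (rule Rt.RL)
next
  case (node x g \<tau> ts)
  have ok: "NO (Node x g \<tau> ts)" using node.hyps node.IH by (intro nodes_ok.node) auto
  note aL = tag_actL[OF node.hyps(1)]
  have sg: "subgroup (tag_grp G fst x) G" using aL unfolding actL_def by blast
  show ?case
  proof (rule Rt.RN[OF ok ok sg_one[OF sg]])
    show "g = g \<otimes>\<^bsub>G\<^esub> \<one>\<^bsub>G\<^esub>" using node.hyps(2) by simp
    show "\<forall>j<length ts. R (ts ! \<tau> j) (ts ! \<tau> (tag_perm ord x \<one>\<^bsub>G\<^esub> j))"
    proof (intro allI impI)
      fix j assume j: "j < length ts"
      have "tag_perm ord x \<one>\<^bsub>G\<^esub> j = j" using aL j node.hyps(4) unfolding actL_def by auto
      moreover have "ts ! \<tau> j \<in> set ts" using perm_nth_in(1)[of \<tau> ts j] node.hyps(3,4) j by simp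
      ultimately show "R (ts ! \<tau> j) (ts ! \<tau> (tag_perm ord x \<one>\<^bsub>G\<^esub> j))" using node.IH by auto
    qed
  qed
qed


lemma Rt_right_node:
  "R s (Node x g2 \<tau>2 ts2) \<Longrightarrow> \<exists>g1 \<tau>1 ts1 h. s = Node x g1 \<tau>1 ts1 \<and> NO s \<and> NO (Node x g2 \<tau>2 ts2)
     \<and> h \<in> tag_grp G fst x \<and> g2 = g1 \<otimes>\<^bsub>G\<^esub> h
     \<and> (\<forall>j<length ts1. R (ts2 ! \<tau>2 j) (ts1 ! \<tau>1 (tag_perm ord x h j)))"
  by (erule Rt.cases) blast+

lemma Rt_left_node:
  "R (Node x g1 \<tau>1 ts1) u \<Longrightarrow> \<exists>g2 \<tau>2 ts2 h. u = Node x g2 \<tau>2 ts2 \<and> NO (Node x g1 \<tau>1 ts1) \<and> NO u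
     \<and> h \<in> tag_grp G fst x \<and> g2 = g1 \<otimes>\<^bsub>G\<^esub> h
     \<and> (\<forall>j<length ts1. R (ts2 ! \<tau>2 j) (ts1 ! \<tau>1 (tag_perm ord x h j)))"
  by (erule Rt.cases) blast+

lemma Rt_leaf: "R s (Leaf j) \<Longrightarrow> s = Leaf j" "R (Leaf j) u \<Longrightarrow> u = Leaf j"
  by (erule Rt.cases; blast)+

lemma Rt_sym: "R s t \<Longrightarrow> R t s"
proof (induction rule: Rt.induct)
  case (RL j) show ?case by (rule Rt.RL)
next
  case (RN x g1 \<tau>1 ts1 g2 \<tau>2 ts2 h)
  note ok1 = RN.hyps(1) and ok2 = RN.hyps(2)
  have tv: "tag_valid II x" using NO_node(1)[OF ok1] .
  note aL = tag_actL[OF tv]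
  have sg: "subgroup (tag_grp G fst x) G" using aL unfolding actL_def by blast
  have hH: "h \<in> tag_grp G fst x" by fact
  have ih: "inv\<^bsub>G\<^esub> h \<in> tag_grp G fst x" using sg_inv[OF sg hH] .
  have hc: "h \<in> carrier G" using sg_car[OF sg hH] .
  have g1c: "g1 \<in> carrier G" using NO_node(2)[OF ok1] .
  have len1: "length ts1 = tag_ar ord x" using NO_node(4)[OF ok1] .
  have len2: "length ts2 = tag_ar ord x" using NO_node(4)[OF ok2] .
  show ?case
  proof (rule Rt.RN[OF ok2 ok1 ih])
    show "g1 = g2 \<otimes>\<^bsub>G\<^esub> inv\<^bsub>G\<^esub> h" using RN.hyps(4) g1c hc by (simp add: G.m_assoc)
    show "\<forall>j<length ts2. R (ts1 ! \<tau>1 j) (ts2 ! \<tau>2 (tag_perm ord x (inv\<^bsub>G\<^esub> h) j))"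
    proof (intro allI impI)
      fix j assume j: "j < length ts2"
      define j' where "j' = tag_perm ord x (inv\<^bsub>G\<^esub> h) j"
      have j'l: "j' < length ts1" unfolding j'_def using aL ih j len1 len2 unfolding actL_def by auto
      have "tag_perm ord x h j' = j" unfolding j'_def using actL_inv(2)[OF aL hH] j len2 by simp
      thus "R (ts1 ! \<tau>1 j) (ts2 ! \<tau>2 (tag_perm ord x (inv\<^bsub>G\<^esub> h) j))"
        using RN.IH j'l unfolding j'_def by metis
    qed
  qed
qed

lemma Rt_trans: "R s t \<Longrightarrow> R t u \<Longrightarrow> R s u"
proof (induction t arbitrary: s u)
  case (Leaf j)
  thus ?case using Rt_leaf by metis
next
  case (Node x g2 \<tau>2 ts2)
  obtain g1 \<tau>1 ts1 h where s: "s = Node x g1 \<tau>1 ts1" and ok1: "NO s" and ok2: "NO (Node x g2 \<tau>2 ts2)"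
    and hH: "h \<in> tag_grp G fst x" and g2: "g2 = g1 \<otimes>\<^bsub>G\<^esub> h"
    and A: "\<forall>j<length ts1. R (ts2 ! \<tau>2 j) (ts1 ! \<tau>1 (tag_perm ord x h j))"
    using Rt_right_node[OF Node.prems(1)] by blast
  obtain g3 \<tau>3 ts3 h' where u: "u = Node x g3 \<tau>3 ts3" and ok3: "NO u"
    and hH': "h' \<in> tag_grp G fst x" and g3: "g3 = g2 \<otimes>\<^bsub>G\<^esub> h'"
    and B: "\<forall>j<length ts2. R (ts3 ! \<tau>3 j) (ts2 ! \<tau>2 (tag_perm ord x h' j))"
    using Rt_left_node[OF Node.prems(2)] by blast
  have tv: "tag_valid II x" using NO_node(1)[OF ok2] .
  note aL = tag_actL[OF tv]
  have sg: "subgroup (tag_grp G fst x) G" using aL unfolding actL_def by blast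
  have hc: "h \<in> carrier G" "h' \<in> carrier G" using sg_car[OF sg hH] sg_car[OF sg hH'] by auto
  have g1c: "g1 \<in> carrier G" using NO_node(2) ok1 s by blast
  have len1: "length ts1 = tag_ar ord x" using NO_node(4) ok1 s by blast
  have len2: "length ts2 = tag_ar ord x" using NO_node(4)[OF ok2] .
  have hh: "h \<otimes>\<^bsub>G\<^esub> h' \<in> tag_grp G fst x" using sg_mult[OF sg hH hH'] .
  show ?case unfolding s u
  proof (rule Rt.RN[OF ok1[unfolded s] ok3[unfolded u] hh])
    show "g3 = g1 \<otimes>\<^bsub>G\<^esub> (h \<otimes>\<^bsub>G\<^esub> h')" using g2 g3 g1c hc by (simp add: G.m_assoc)
    show "\<forall>j<length ts1. R (ts3 ! \<tau>3 j) (ts1 ! \<tau>1 (tag_perm ord x (h \<otimes>\<^bsub>G\<^esub> h') j))"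
    proof (intro allI impI)
      fix j assume j: "j < length ts1"
      define j' where "j' = tag_perm ord x h' j"
      have j'l: "j' < length ts2" unfolding j'_def using aL hH' j len1 len2 unfolding actL_def by auto
      have e: "tag_perm ord x (h \<otimes>\<^bsub>G\<^esub> h') j = tag_perm ord x h j'"
        unfolding j'_def using aL hH hH' j len1 unfolding actL_def by auto
      have 1: "R (ts3 ! \<tau>3 j) (ts2 ! \<tau>2 j')" using B j len1 len2 unfolding j'_def by auto
      have 2: "R (ts2 ! \<tau>2 j') (ts1 ! \<tau>1 (tag_perm ord x h j'))" using A j'l len1 len2 by auto
      have "\<tau>2 permutes {..<length ts2}" using NO_node(3)[OF ok2] len2 by simp
      hence mid: "ts2 ! \<tau>2 j' \<in> set ts2" using perm_nth_in(1) j'l by blast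
      show "R (ts3 ! \<tau>3 j) (ts1 ! \<tau>1 (tag_perm ord x (h \<otimes>\<^bsub>G\<^esub> h') j))"
        unfolding e using Node.IH[OF mid 1 2] .
    qed
  qed
qed


lemma feq_Rt: "feq G II fst ord s t \<Longrightarrow> NO s \<or> NO t \<Longrightarrow> R s t"
proof (induction rule: feq.induct)
  case (refl t) thus ?case using Rt_refl by blast
next
  case (sym s t) thus ?case using Rt_sym by blast
next
  case (trans s t u)
  show ?case
  proof (cases "NO s")
    case True
    hence st: "R s t" using trans.IH(1) by blast
    hence "NO t" using Rt_ok by blast
    hence "R t u" using trans.IH(2) by blast
    thus ?thesis using Rt_trans st by blast
  next
    case False
    hence "NO u" using trans.prems by blast
    hence tu: "R t u" using trans.IH(2) by blast
    hence "NO t" using Rt_ok by blast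
    hence "R s t" using trans.IH(1) by blast
    thus ?thesis using Rt_trans tu by blast
  qed
next
  case (cong ts us x g \<tau>)
  have len: "length ts = length us" using cong.IH list_all2_lengthD by blast
  have pw: "\<And>i. i < length ts \<Longrightarrow> NO (ts ! i) \<or> NO (us ! i) \<Longrightarrow> R (ts ! i) (us ! i)"
    using cong.IH len by (auto simp: list_all2_conv_all_nth)
  have okb: "NO (Node x g \<tau> ts) \<and> NO (Node x g \<tau> us)"
  proof (cases "NO (Node x g \<tau> ts)")
    case True
    note N = NO_node[OF True]
    have "\<forall>t\<in>set us. NO t"
    proof
      fix t assume "t \<in> set us"
      then obtain i where i: "i < length us" "t = us ! i" by (auto simp: in_set_conv_nth)
      have "NO (ts ! i)" using N(5) i len by auto
      thus "NO t" using pw[of i] i len Rt_ok by auto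
    qed
    hence "NO (Node x g \<tau> us)" using N len by (intro nodes_ok.node) auto
    thus ?thesis using True by blast
  next
    case False
    hence F: "NO (Node x g \<tau> us)" using cong.prems by blast
    note N = NO_node[OF F]
    have "\<forall>t\<in>set ts. NO t"
    proof
      fix t assume "t \<in> set ts"
      then obtain i where i: "i < length ts" "t = ts ! i" by (auto simp: in_set_conv_nth)
      have "NO (us ! i)" using N(5) i len by auto
      thus "NO t" using pw[of i] i len Rt_ok by auto
    qed
    hence "NO (Node x g \<tau> ts)" using N len by (intro nodes_ok.node) auto
    thus ?thesis using F by blast
  qed
  have tv: "tag_valid II x" using NO_node(1) okb by blast
  note aL = tag_actL[OF tv]
  have sg: "subgroup (tag_grp G fst x) G" using aL unfolding actL_def by blast
  have gc: "g \<in> carrier G" using NO_node(2) okb by blast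
  have lt: "length ts = tag_ar ord x" using NO_node(4) okb by blast
  have tp: "\<tau> permutes {..<length ts}" using NO_node(3) okb lt by metis
  have cok: "\<forall>t\<in>set ts. NO t" using NO_node(5) okb by blast
  show ?case
  proof (rule Rt.RN[OF conjunct1[OF okb] conjunct2[OF okb] sg_one[OF sg]])
    show "g = g \<otimes>\<^bsub>G\<^esub> \<one>\<^bsub>G\<^esub>" using gc by simp
    show "\<forall>j<length ts. R (us ! \<tau> j) (ts ! \<tau> (tag_perm ord x \<one>\<^bsub>G\<^esub> j))"
    proof (intro allI impI)
      fix j assume j: "j < length ts"
      have "tag_perm ord x \<one>\<^bsub>G\<^esub> j = j" using aL j lt unfolding actL_def by auto
      moreover have tj: "\<tau> j < length ts" using perm_nth_in(2)[OF tp j] .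
      moreover have "NO (ts ! \<tau> j)" using cok tj by simp
      ultimately show "R (us ! \<tau> j) (ts ! \<tau> (tag_perm ord x \<one>\<^bsub>G\<^esub> j))"
        using pw[OF tj] Rt_sym by auto
    qed
  qed
next
  case (coset x g \<tau> ts h)
  note ok = coset.hyps(1)
  note N = NO_node[OF ok]
  note aL = tag_actL[OF N(1)]
  have sg: "subgroup (tag_grp G fst x) G" using aL unfolding actL_def by blast
  have hH: "h \<in> tag_grp G fst x" using coset.hyps(2) .
  have hc: "h \<in> carrier G" using sg_car[OF sg hH] .
  have ih: "inv\<^bsub>G\<^esub> h \<in> tag_grp G fst x" using sg_inv[OF sg hH] .
  have ok': "NO (Node x (g \<otimes>\<^bsub>G\<^esub> h) (\<tau> \<circ> tag_perm ord x h) ts)"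
  proof (rule nodes_ok.node)
    show "\<tau> \<circ> tag_perm ord x h permutes {..<tag_ar ord x}"
      using permutes_compose[OF tag_permutes[OF N(1) hH] N(3)] .
  qed (use N hc in auto)
  show ?case
  proof (rule Rt.RN[OF ok' ok ih])
    show "g = g \<otimes>\<^bsub>G\<^esub> h \<otimes>\<^bsub>G\<^esub> inv\<^bsub>G\<^esub> h" using N(2) hc by (simp add: G.m_assoc)
    show "\<forall>j<length ts. R (ts ! \<tau> j) (ts ! (\<tau> \<circ> tag_perm ord x h) (tag_perm ord x (inv\<^bsub>G\<^esub> h) j))"
    proof (intro allI impI)
      fix j assume j: "j < length ts"
      have "tag_perm ord x h (tag_perm ord x (inv\<^bsub>G\<^esub> h) j) = j" using actL_inv(2)[OF aL hH] j N(4) by simp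
      moreover have "R (ts ! \<tau> j) (ts ! \<tau> j)"
        using Rt_refl N(5) perm_nth_in(1)[of \<tau> ts j] N(3,4) j by simp
      ultimately show "R (ts ! \<tau> j) (ts ! (\<tau> \<circ> tag_perm ord x h) (tag_perm ord x (inv\<^bsub>G\<^esub> h) j))" by simp
    qed
  qed
next
  case (sigma x g \<tau> ts \<rho>)
  note ok = sigma.hyps(1)
  note N = NO_node[OF ok]
  note aL = tag_actL[OF N(1)]
  have sg: "subgroup (tag_grp G fst x) G" using aL unfolding actL_def by blast
  have rp: "\<rho> permutes {..<tag_ar ord x}" using sigma.hyps(2) N(4) by simp
  have ok1: "NO (Node x g (\<rho> \<circ> \<tau>) ts)"
  proof (rule nodes_ok.node)
    show "\<rho> \<circ> \<tau> permutes {..<tag_ar ord x}" using permutes_compose[OF N(3) rp] .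
  qed (use N in auto)
  have ok2: "NO (Node x g \<tau> (map (\<lambda>j. ts ! \<rho> j) [0..<length ts]))"
  proof (rule nodes_ok.node)
    show "\<forall>t\<in>set (map (\<lambda>j. ts ! \<rho> j) [0..<length ts]). NO t"
    proof
      fix t assume "t \<in> set (map (\<lambda>j. ts ! \<rho> j) [0..<length ts])"
      then obtain j where j: "j < length ts" "t = ts ! \<rho> j" by auto
      have "\<rho> j < length ts" using perm_nth_in(2)[OF sigma.hyps(2) j(1)] .
      thus "NO t" using N(5) j by simp
    qed
  qed (use N in auto)
  show ?case
  proof (rule Rt.RN[OF ok1 ok2 sg_one[OF sg]])
    show "g = g \<otimes>\<^bsub>G\<^esub> \<one>\<^bsub>G\<^esub>" using N(2) by simp
    show "\<forall>j<length ts. R (map (\<lambda>j. ts ! \<rho> j) [0..<length ts] ! \<tau> j) (ts ! (\<rho> \<circ> \<tau>) (tag_perm ord x \<one>\<^bsub>G\<^esub> j))"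
    proof (intro allI impI)
      fix j assume j: "j < length ts"
      have t1: "tag_perm ord x \<one>\<^bsub>G\<^esub> j = j" using aL j N(4) unfolding actL_def by auto
      have tj: "\<tau> j < length ts" using perm_nth_in(2)[of \<tau> ts j] N(3,4) j by simp
      have rtj: "\<rho> (\<tau> j) < length ts" using perm_nth_in(2)[OF sigma.hyps(2) tj] .
      have "R (ts ! \<rho> (\<tau> j)) (ts ! \<rho> (\<tau> j))" using Rt_refl N(5) rtj by simp
      thus "R (map (\<lambda>j. ts ! \<rho> j) [0..<length ts] ! \<tau> j) (ts ! (\<rho> \<circ> \<tau>) (tag_perm ord x \<one>\<^bsub>G\<^esub> j))"
        using t1 tj by simp
    qed
  qed
qed

lemma set_perm_nth: "p permutes {..<length xs} \<Longrightarrow> set xs = (\<lambda>j. xs ! p j) ` {..<length xs}"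
proof -
  assume p: "p permutes {..<length xs}"
  have "set xs = (!) xs ` {..<length xs}" by (auto simp: in_set_conv_nth)
  also have "\<dots> = (!) xs ` (p ` {..<length xs})" using permutes_image[OF p] by simp
  finally show ?thesis by (simp add: image_image)
qed

lemma Rt_leaves: "R s t \<Longrightarrow> set (leaves s) = set (leaves t)"
proof (induction rule: Rt.induct)
  case (RL j) show ?case by simp
next
  case (RN x g1 \<tau>1 ts1 g2 \<tau>2 ts2 h)
  note ok1 = RN.hyps(1) and ok2 = RN.hyps(2)
  note N1 = NO_node[OF ok1] and N2 = NO_node[OF ok2]
  have hH: "h \<in> tag_grp G fst x" by fact
  have p1: "\<tau>1 \<circ> tag_perm ord x h permutes {..<length ts1}"
    using permutes_compose[OF tag_permutes[OF N1(1) hH] N1(3)] N1(4) by simp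
  have p2: "\<tau>2 permutes {..<length ts2}" using N2(3) N2(4) by simp
  have len: "length ts1 = length ts2" using N1(4) N2(4) by simp
  have "set (leaves (Node x g1 \<tau>1 ts1)) = (\<Union>t\<in>set ts1. set (leaves t))" by simp
  also have "\<dots> = (\<Union>j\<in>{..<length ts1}. set (leaves (ts1 ! \<tau>1 (tag_perm ord x h j))))"
    using set_perm_nth[OF p1] by simp
  also have "\<dots> = (\<Union>j\<in>{..<length ts2}. set (leaves (ts2 ! \<tau>2 j)))"
    using RN.IH len by auto
  also have "\<dots> = (\<Union>t\<in>set ts2. set (leaves t))" using set_perm_nth[OF p2] by simp
  also have "\<dots> = set (leaves (Node x g2 \<tau>2 ts2))" by simp
  finally show ?case .
qed

end

lemma distinct_concat_nth: "distinct (concat xs) \<Longrightarrow> i < length xs \<Longrightarrow> distinct (xs ! i)"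
proof (induction xs arbitrary: i)
  case Nil thus ?case by simp
next
  case (Cons x xs) thus ?case by (cases i) auto
qed

lemma distinct_concat_disj:
  "distinct (concat xs) \<Longrightarrow> i < length xs \<Longrightarrow> i' < length xs \<Longrightarrow> i \<noteq> i' \<Longrightarrow> set (xs ! i) \<inter> set (xs ! i') = {}"
proof (induction xs arbitrary: i i')
  case Nil thus ?case by simp
next
  case (Cons x xs)
  have d: "distinct x" "distinct (concat xs)" "set x \<inter> set (concat xs) = {}" using Cons.prems(1) by auto
  have sub: "\<And>m. m < length xs \<Longrightarrow> set (xs ! m) \<subseteq> set (concat xs)"
    by (auto simp: set_concat) (metis nth_mem)
  show ?case
  proof (cases i)
    case 0
    then obtain m where m: "i' = Suc m" using Cons.prems(4) by (cases i') auto
    thus ?thesis using 0 d(3) sub[of m] Cons.prems(3) by auto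
  next
    case (Suc n)
    show ?thesis
    proof (cases i')
      case 0 thus ?thesis using Suc d(3) sub[of n] Cons.prems(2) by auto
    next
      case (Suc m) thus ?thesis using \<open>i = Suc n\<close> Cons.IH[OF d(2), of n m] Cons.prems by auto
    qed
  qed
qed

context smctx begin

lemma actL_restrict: "actL G H L a \<Longrightarrow> subgroup K G \<Longrightarrow> K \<subseteq> H \<Longrightarrow> S \<subseteq> L \<Longrightarrow> (\<forall>h\<in>K. \<forall>x\<in>S. a h x \<in> S) \<Longrightarrow> actL G K S a"
  unfolding actL_def by blast

lemma gl1: "x \<in> carrier G \<Longrightarrow> y \<in> carrier G \<Longrightarrow> x \<otimes>\<^bsub>G\<^esub> (inv\<^bsub>G\<^esub> x \<otimes>\<^bsub>G\<^esub> y) = y"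
  by (simp add: G.m_assoc[symmetric])
lemma gl2: "x \<in> carrier G \<Longrightarrow> y \<in> carrier G \<Longrightarrow> inv\<^bsub>G\<^esub> x \<otimes>\<^bsub>G\<^esub> (x \<otimes>\<^bsub>G\<^esub> y) = y"
  by (simp add: G.m_assoc[symmetric])

lemma conj_mult: "g \<in> carrier G \<Longrightarrow> a \<in> carrier G \<Longrightarrow> b \<in> carrier G \<Longrightarrow>
   (inv\<^bsub>G\<^esub> g \<otimes>\<^bsub>G\<^esub> a \<otimes>\<^bsub>G\<^esub> g) \<otimes>\<^bsub>G\<^esub> (inv\<^bsub>G\<^esub> g \<otimes>\<^bsub>G\<^esub> b \<otimes>\<^bsub>G\<^esub> g) = inv\<^bsub>G\<^esub> g \<otimes>\<^bsub>G\<^esub> (a \<otimes>\<^bsub>G\<^esub> b) \<otimes>\<^bsub>G\<^esub> g"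
  by (simp add: G.m_assoc gl1)

lemma conj_inv: "g \<in> carrier G \<Longrightarrow> a \<in> carrier G \<Longrightarrow>
   inv\<^bsub>G\<^esub> (inv\<^bsub>G\<^esub> g \<otimes>\<^bsub>G\<^esub> a \<otimes>\<^bsub>G\<^esub> g) = inv\<^bsub>G\<^esub> g \<otimes>\<^bsub>G\<^esub> inv\<^bsub>G\<^esub> a \<otimes>\<^bsub>G\<^esub> g"
  by (simp add: G.inv_mult_group G.m_assoc)

lemma conj_back: "g \<in> carrier G \<Longrightarrow> h \<in> carrier G \<Longrightarrow>
   g \<otimes>\<^bsub>G\<^esub> (inv\<^bsub>G\<^esub> g \<otimes>\<^bsub>G\<^esub> h \<otimes>\<^bsub>G\<^esub> g) \<otimes>\<^bsub>G\<^esub> inv\<^bsub>G\<^esub> g = h"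
  by (simp add: G.m_assoc gl1)

lemma conj_subgroup:
  assumes sg: "subgroup H G" and g: "g \<in> carrier G"
  shows "subgroup ((\<lambda>h. inv\<^bsub>G\<^esub> g \<otimes>\<^bsub>G\<^esub> h \<otimes>\<^bsub>G\<^esub> g) ` H) G"
proof (rule G.subgroupI)
  show "(\<lambda>h. inv\<^bsub>G\<^esub> g \<otimes>\<^bsub>G\<^esub> h \<otimes>\<^bsub>G\<^esub> g) ` H \<subseteq> carrier G" using sg_car[OF sg] g by auto
  show "(\<lambda>h. inv\<^bsub>G\<^esub> g \<otimes>\<^bsub>G\<^esub> h \<otimes>\<^bsub>G\<^esub> g) ` H \<noteq> {}" using sg_one[OF sg] by blast
next
  fix x assume "x \<in> (\<lambda>h. inv\<^bsub>G\<^esub> g \<otimes>\<^bsub>G\<^esub> h \<otimes>\<^bsub>G\<^esub> g) ` H"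
  then obtain h where h: "h \<in> H" "x = inv\<^bsub>G\<^esub> g \<otimes>\<^bsub>G\<^esub> h \<otimes>\<^bsub>G\<^esub> g" by blast
  have "inv\<^bsub>G\<^esub> x = inv\<^bsub>G\<^esub> g \<otimes>\<^bsub>G\<^esub> inv\<^bsub>G\<^esub> h \<otimes>\<^bsub>G\<^esub> g"
    using conj_inv[OF g sg_car[OF sg h(1)]] h(2) by simp
  thus "inv\<^bsub>G\<^esub> x \<in> (\<lambda>h. inv\<^bsub>G\<^esub> g \<otimes>\<^bsub>G\<^esub> h \<otimes>\<^bsub>G\<^esub> g) ` H" using sg_inv[OF sg h(1)] by blast
next
  fix x y assume "x \<in> (\<lambda>h. inv\<^bsub>G\<^esub> g \<otimes>\<^bsub>G\<^esub> h \<otimes>\<^bsub>G\<^esub> g) ` H" "y \<in> (\<lambda>h. inv\<^bsub>G\<^esub> g \<otimes>\<^bsub>G\<^esub> h \<otimes>\<^bsub>G\<^esub> g) ` H"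
  then obtain h k where h: "h \<in> H" "x = inv\<^bsub>G\<^esub> g \<otimes>\<^bsub>G\<^esub> h \<otimes>\<^bsub>G\<^esub> g"
    and k: "k \<in> H" "y = inv\<^bsub>G\<^esub> g \<otimes>\<^bsub>G\<^esub> k \<otimes>\<^bsub>G\<^esub> g" by blast
  have "x \<otimes>\<^bsub>G\<^esub> y = inv\<^bsub>G\<^esub> g \<otimes>\<^bsub>G\<^esub> (h \<otimes>\<^bsub>G\<^esub> k) \<otimes>\<^bsub>G\<^esub> g"
    using conj_mult[OF g sg_car[OF sg h(1)] sg_car[OF sg k(1)]] h(2) k(2) by simp
  thus "x \<otimes>\<^bsub>G\<^esub> y \<in> (\<lambda>h. inv\<^bsub>G\<^esub> g \<otimes>\<^bsub>G\<^esub> h \<otimes>\<^bsub>G\<^esub> g) ` H" using sg_mult[OF sg h(1) k(1)] by blast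
qed

lemma conj_image_back:
  assumes sg: "subgroup H G" and g: "g \<in> carrier G"
  shows "(\<lambda>h. g \<otimes>\<^bsub>G\<^esub> h \<otimes>\<^bsub>G\<^esub> inv\<^bsub>G\<^esub> g) ` ((\<lambda>h. inv\<^bsub>G\<^esub> g \<otimes>\<^bsub>G\<^esub> h \<otimes>\<^bsub>G\<^esub> g) ` H) = H"
  using conj_back[OF g] sg_car[OF sg] by (simp add: image_image)

lemma Fset_id: "F H n c \<Longrightarrow> Fset G F H {..<n} c"
  unfolding Fset_def by (rule exI[of _ n], rule exI[of _ c], rule exI[of _ id]) auto

lemma Fset_tag:
  assumes tv: "tag_valid II x" and g: "g \<in> carrier G" and sg: "subgroup H G"
    and cj: "\<forall>h\<in>H. inv\<^bsub>G\<^esub> g \<otimes>\<^bsub>G\<^esub> h \<otimes>\<^bsub>G\<^esub> g \<in> tag_grp G fst x"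
  shows "Fset G F H {..<tag_ar ord x} (\<lambda>h. tag_perm ord x (inv\<^bsub>G\<^esub> g \<otimes>\<^bsub>G\<^esub> h \<otimes>\<^bsub>G\<^esub> g))"
proof (cases x)
  case Nul thus ?thesis using Fset_triv[OF sg] by simp
next
  case Bin thus ?thesis using Fset_triv[OF sg] by simp
next
  case (Ex i)
  obtain H' K where i: "i = (H', K)" by (cases i)
  have iI: "i \<in> II" using tv Ex by simp
  hence sgH': "subgroup H' G" and ex: "\<exists>p c. is_orbit G H' K p c \<and> F H' p c"
    unfolding O_index_def i by auto
  obtain p c where oc: "is_orbit G H' K p c" and Fc: "F H' p c" using ex by blast
  define k where "k = fst (ord i)"
  define d where "d = snd (ord i)"
  have od: "is_orbit G H' K k d" using ordok iI unfolding k_def d_def i by auto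
  obtain i0 where fc: "fin_hset G H' p c" and i0: "i0 < p" "{h \<in> H'. c h i0 = i0} = K" "\<forall>j<p. \<exists>h\<in>H'. c h i0 = j"
    using oc unfolding is_orbit_def by blast
  obtain i1 where fd: "fin_hset G H' k d" and i1: "i1 < k" "{h \<in> H'. d h i1 = i1} = K" "\<forall>j<k. \<exists>h\<in>H'. d h i1 = j"
    using od unfolding is_orbit_def by blast
  obtain f where f: "bij_betw f {..<p} {..<k}" and feq: "\<forall>h\<in>H'. \<forall>j<p. f (c h j) = d h (f j)"
    using orbit_iso[OF fc i0 fd i1] by blast
  have "Fset G F H' {..<k} d"
  proof (rule Fset_iso[OF Fset_id[OF Fc] f])
    show "\<forall>h\<in>H'. \<forall>x\<in>{..<p}. f (c h x) = d h (f x)" using feq by auto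
  qed
  hence Fd: "F H' k d" using Fset_enum[of H' "{..<k}" d id k d] fd bij_betw_id by auto
  define H0 where "H0 = (\<lambda>h. inv\<^bsub>G\<^esub> g \<otimes>\<^bsub>G\<^esub> h \<otimes>\<^bsub>G\<^esub> g) ` H"
  have sgH0: "subgroup H0 G" unfolding H0_def using conj_subgroup[OF sg g] .
  have H0H': "H0 \<subseteq> H'" unfolding H0_def using cj Ex i by auto
  have "F H0 k d" using IS_restr[OF Fd sgH0 H0H'] .
  hence "F ((\<lambda>h. g \<otimes>\<^bsub>G\<^esub> h \<otimes>\<^bsub>G\<^esub> inv\<^bsub>G\<^esub> g) ` H0) k (\<lambda>h. d (inv\<^bsub>G\<^esub> g \<otimes>\<^bsub>G\<^esub> h \<otimes>\<^bsub>G\<^esub> g))"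
    using IS_conj[OF _ g] by blast
  hence FH: "F H k (\<lambda>h. d (inv\<^bsub>G\<^esub> g \<otimes>\<^bsub>G\<^esub> h \<otimes>\<^bsub>G\<^esub> g))"
    unfolding H0_def conj_image_back[OF sg g] .
  have c1: "Fset G F H {..<k} (\<lambda>h. d (inv\<^bsub>G\<^esub> g \<otimes>\<^bsub>G\<^esub> h \<otimes>\<^bsub>G\<^esub> g))" using Fset_id[OF FH] .
  have c2: "tag_ar ord x = k" unfolding Ex k_def by simp
  have c3: "\<forall>h\<in>H. \<forall>y\<in>{..<k}. id (d (inv\<^bsub>G\<^esub> g \<otimes>\<^bsub>G\<^esub> h \<otimes>\<^bsub>G\<^esub> g) y) = tag_perm ord x (inv\<^bsub>G\<^esub> g \<otimes>\<^bsub>G\<^esub> h \<otimes>\<^bsub>G\<^esub> g) (id y)"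
    unfolding Ex k_def d_def by simp
  show ?thesis using Fset_iso[OF c1 bij_betw_id c3] c2 by simp
qed


lemma fixed_key:
  assumes ok: "NO (Node x g \<tau> ts)" and hH: "h \<in> H" and sg: "subgroup H G"
    and fx: "\<forall>h\<in>H. R (tact G h (a h) (Node x g \<tau> ts)) (Node x g \<tau> ts)"
  shows "inv\<^bsub>G\<^esub> g \<otimes>\<^bsub>G\<^esub> h \<otimes>\<^bsub>G\<^esub> g \<in> tag_grp G fst x \<and>
    (\<forall>j<length ts. R (ts ! \<tau> j) (tact G (inv\<^bsub>G\<^esub> h) (a (inv\<^bsub>G\<^esub> h))
        (ts ! \<tau> (tag_perm ord x (inv\<^bsub>G\<^esub> g \<otimes>\<^bsub>G\<^esub> h \<otimes>\<^bsub>G\<^esub> g) j))))"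
proof -
  note N = NO_node[OF ok]
  have ih: "inv\<^bsub>G\<^esub> h \<in> H" using sg_inv[OF sg hH] .
  have hc: "h \<in> carrier G" using sg_car[OF sg hH] .
  have R0: "R (Node x (inv\<^bsub>G\<^esub> h \<otimes>\<^bsub>G\<^esub> g) \<tau> (map (tact G (inv\<^bsub>G\<^esub> h) (a (inv\<^bsub>G\<^esub> h))) ts)) (Node x g \<tau> ts)"
    using fx ih by simp
  obtain g2 \<tau>2 ts2 k where e: "Node x g \<tau> ts = Node x g2 \<tau>2 ts2"
    and kH: "k \<in> tag_grp G fst x" and gk: "g2 = (inv\<^bsub>G\<^esub> h \<otimes>\<^bsub>G\<^esub> g) \<otimes>\<^bsub>G\<^esub> k"
    and ch: "\<forall>j<length (map (tact G (inv\<^bsub>G\<^esub> h) (a (inv\<^bsub>G\<^esub> h))) ts).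
        R (ts2 ! \<tau>2 j) (map (tact G (inv\<^bsub>G\<^esub> h) (a (inv\<^bsub>G\<^esub> h))) ts ! \<tau> (tag_perm ord x k j))"
    using Rt_left_node[OF R0] by blast
  have sgx: "subgroup (tag_grp G fst x) G" using tag_actL[OF N(1)] unfolding actL_def by blast
  have kc: "k \<in> carrier G" using sg_car[OF sgx kH] .
  have gc: "g \<in> carrier G" using N(2) .
  have "g = (inv\<^bsub>G\<^esub> h \<otimes>\<^bsub>G\<^esub> g) \<otimes>\<^bsub>G\<^esub> k" using e gk by simp
  hence "inv\<^bsub>G\<^esub> (inv\<^bsub>G\<^esub> h \<otimes>\<^bsub>G\<^esub> g) \<otimes>\<^bsub>G\<^esub> g = k" using gc hc kc
    by (metis G.inv_closed G.m_closed gl2)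
  hence kk: "k = inv\<^bsub>G\<^esub> g \<otimes>\<^bsub>G\<^esub> h \<otimes>\<^bsub>G\<^esub> g" using gc hc by (simp add: G.inv_mult_group)
  have "\<forall>j<length ts. R (ts ! \<tau> j) (tact G (inv\<^bsub>G\<^esub> h) (a (inv\<^bsub>G\<^esub> h))
        (ts ! \<tau> (tag_perm ord x (inv\<^bsub>G\<^esub> g \<otimes>\<^bsub>G\<^esub> h \<otimes>\<^bsub>G\<^esub> g) j)))"
  proof (intro allI impI)
    fix j assume j: "j < length ts"
    have tl: "tag_perm ord x k j < length ts" using tag_actL[OF N(1)] kH j N(4) unfolding actL_def by auto
    have "\<tau> (tag_perm ord x k j) < length ts" using perm_nth_in(2)[of \<tau> ts] N(3,4) tl by simp
    thus "R (ts ! \<tau> j) (tact G (inv\<^bsub>G\<^esub> h) (a (inv\<^bsub>G\<^esub> h))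
        (ts ! \<tau> (tag_perm ord x (inv\<^bsub>G\<^esub> g \<otimes>\<^bsub>G\<^esub> h \<otimes>\<^bsub>G\<^esub> g) j)))"
      using ch j e kk by auto
  qed
  thus ?thesis using kH kk by blast
qed

lemma fwd:
  "NO t \<Longrightarrow> distinct (leaves t) \<Longrightarrow> actL G H (set (leaves t)) a
   \<Longrightarrow> (\<forall>h\<in>H. R (tact G h (a h) t) t) \<Longrightarrow> Fset G F H (set (leaves t)) a"
proof (induction t arbitrary: H)
  case (Leaf j)
  have sg: "subgroup H G" using Leaf.prems(3) unfolding actL_def by blast
  have "\<forall>h\<in>H. \<forall>y\<in>{j}. a h y = y" using Leaf.prems(3) unfolding actL_def by auto
  thus ?case using Fset_triv[OF sg] by simp
next
  case (Node x g \<tau> ts)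
  note ok = Node.prems(1) and dist = Node.prems(2) and aL = Node.prems(3) and fx = Node.prems(4)
  note N = NO_node[OF ok]
  have sg: "subgroup H G" using aL unfolding actL_def by blast
  define k where "k = tag_ar ord x"
  define \<rho> where "\<rho> h = tag_perm ord x (inv\<^bsub>G\<^esub> g \<otimes>\<^bsub>G\<^esub> h \<otimes>\<^bsub>G\<^esub> g)" for h
  define C where "C j = ts ! \<tau> j" for j
  define Lf where "Lf j = set (leaves (C j))" for j
  define L where "L = set (leaves (Node x g \<tau> ts))"
  have lenk: "length ts = k" using N(4) unfolding k_def .
  have tp: "\<tau> permutes {..<length ts}" using N(3) lenk unfolding k_def by simp
  have KEY: "\<And>h. h \<in> H \<Longrightarrow> inv\<^bsub>G\<^esub> g \<otimes>\<^bsub>G\<^esub> h \<otimes>\<^bsub>G\<^esub> g \<in> tag_grp G fst x \<and>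
      (\<forall>j<k. R (C j) (tact G (inv\<^bsub>G\<^esub> h) (a (inv\<^bsub>G\<^esub> h)) (C (\<rho> h j))))"
    using fixed_key[OF ok _ sg fx] unfolding C_def \<rho>_def lenk by blast
  have FP: "Fset G F H {..<k} \<rho>" unfolding k_def \<rho>_def
    using Fset_tag[OF N(1) N(2) sg] KEY by blast
  have aP: "actL G H {..<k} \<rho>" using Fset_actL[OF FP] by blast
  have Cin: "\<And>j. j < k \<Longrightarrow> C j \<in> set ts" unfolding C_def using perm_nth_in(1)[OF tp] lenk by simp
  have LU: "L = (\<Union>j\<in>{..<k}. Lf j)"
  proof -
    have "L = (\<Union>t\<in>set ts. set (leaves t))" unfolding L_def by simp
    also have "\<dots> = (\<Union>j\<in>{..<k}. Lf j)" unfolding Lf_def C_def using set_perm_nth[OF tp] lenk by simp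
    finally show ?thesis .
  qed
  have dc: "distinct (concat (map leaves ts))" using dist by simp
  have disj: "\<forall>j\<in>{..<k}. \<forall>j'\<in>{..<k}. j \<noteq> j' \<longrightarrow> Lf j \<inter> Lf j' = {}"
  proof (intro ballI impI)
    fix j j' assume j: "j \<in> {..<k}" and j': "j' \<in> {..<k}" and ne: "j \<noteq> j'"
    have t: "\<tau> j < length ts" "\<tau> j' < length ts" using perm_nth_in(2)[OF tp] j j' lenk by auto
    have "\<tau> j \<noteq> \<tau> j'" using ne permutes_inj[OF tp] by (meson injD)
    hence "set (map leaves ts ! \<tau> j) \<inter> set (map leaves ts ! \<tau> j') = {}"
      using distinct_concat_disj[OF dc] t by simp
    thus "Lf j \<inter> Lf j' = {}" unfolding Lf_def C_def using t by simp
  qed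
  have LfL: "\<And>j. j < k \<Longrightarrow> Lf j \<subseteq> L" using LU by blast
  have Lf_eq: "\<And>h j. h \<in> H \<Longrightarrow> j < k \<Longrightarrow> Lf j = a (inv\<^bsub>G\<^esub> h) ` Lf (\<rho> h j)"
  proof -
    fix h j assume h: "h \<in> H" and j: "j < k"
    have "R (C j) (tact G (inv\<^bsub>G\<^esub> h) (a (inv\<^bsub>G\<^esub> h)) (C (\<rho> h j)))" using KEY h j by blast
    hence "Lf j = set (leaves (tact G (inv\<^bsub>G\<^esub> h) (a (inv\<^bsub>G\<^esub> h)) (C (\<rho> h j))))"
      unfolding Lf_def using Rt_leaves by blast
    thus "Lf j = a (inv\<^bsub>G\<^esub> h) ` Lf (\<rho> h j)" unfolding Lf_def leaves_tact by simp
  qed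
  have rl: "\<And>h j. h \<in> H \<Longrightarrow> j < k \<Longrightarrow> \<rho> h j < k" using aP unfolding actL_def by blast
  have eqv: "\<forall>h\<in>H. \<forall>j\<in>{..<k}. \<forall>y\<in>Lf j. a h y \<in> Lf (\<rho> h j)"
  proof (intro ballI)
    fix h j y assume h: "h \<in> H" and j: "j \<in> {..<k}" and y: "y \<in> Lf j"
    then obtain z where z: "z \<in> Lf (\<rho> h j)" "y = a (inv\<^bsub>G\<^esub> h) z" using Lf_eq by blast
    have "z \<in> L" using z(1) LfL rl h j by blast
    hence "a h y = z" using z(2) actL_inv(2)[OF aL[folded L_def] h] by simp
    thus "a h y \<in> Lf (\<rho> h j)" using z(1) by simp
  qed
  have fib: "\<forall>j\<in>{..<k}. Fset G F {h\<in>H. \<rho> h j = j} (Lf j) a"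
  proof
    fix j assume j: "j \<in> {..<k}"
    define S where "S = {h\<in>H. \<rho> h j = j}"
    have sgS: "subgroup S G" unfolding S_def using stab_subgroup[OF aP] j by blast
    have okC: "NO (C j)" using N(5) Cin j by blast
    have dC: "distinct (leaves (C j))"
      using distinct_concat_nth[OF dc] perm_nth_in(2)[OF tp] j lenk unfolding C_def by simp
    have aC: "actL G S (Lf j) a"
    proof (rule actL_restrict[OF aL[folded L_def] sgS])
      show "S \<subseteq> H" unfolding S_def by blast
      show "Lf j \<subseteq> L" using LfL j by blast
      show "\<forall>h\<in>S. \<forall>x\<in>Lf j. a h x \<in> Lf j" using eqv j unfolding S_def by force
    qed
    have fC: "\<forall>h\<in>S. R (tact G h (a h) (C j)) (C j)"
    proof
      fix h assume h: "h \<in> S"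
      have ihS: "inv\<^bsub>G\<^esub> h \<in> S" using sg_inv[OF sgS h] .
      hence ihH: "inv\<^bsub>G\<^esub> h \<in> H" and rj: "\<rho> (inv\<^bsub>G\<^esub> h) j = j" unfolding S_def by auto
      have hc: "h \<in> carrier G" using h sg_car[OF sg] unfolding S_def by blast
      have "R (C j) (tact G (inv\<^bsub>G\<^esub> (inv\<^bsub>G\<^esub> h)) (a (inv\<^bsub>G\<^esub> (inv\<^bsub>G\<^esub> h))) (C (\<rho> (inv\<^bsub>G\<^esub> h) j)))"
        using KEY[OF ihH] j by blast
      hence "R (C j) (tact G h (a h) (C j))" using rj hc by simp
      thus "R (tact G h (a h) (C j)) (C j)" using Rt_sym by blast
    qed
    have "Fset G F S (set (leaves (C j))) a"
      using Node.IH[OF Cin[of j] okC dC aC[unfolded Lf_def] fC] j by blast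
    thus "Fset G F {h\<in>H. \<rho> h j = j} (Lf j) a" unfolding S_def Lf_def .
  qed
  have finL: "finite L" unfolding L_def by simp
  show ?case using Fset_DI[OF FP aL[folded L_def] finL LU disj eqv fib] unfolding L_def .
qed

end

context smctx begin

abbreviation "FQ \<equiv> feq G II fst ord"

lemma bwd_empty:
  assumes sg: "subgroup H G"
  shows "\<exists>t. NO t \<and> distinct (leaves t) \<and> set (leaves t) = {} \<and> (\<forall>h\<in>H. FQ (tact G h (a h) t) t)"
proof -
  define t :: "('g set \<times> 'g set, 'g) ftree" where "t = Node Nul \<one>\<^bsub>G\<^esub> id []"
  have ok: "NO t" unfolding t_def by (rule nodes_ok.node) (auto simp: permutes_id)
  have "\<forall>h\<in>H. FQ (tact G h (a h) t) t"
  proof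
    fix h assume h: "h \<in> H"
    have hc: "h \<in> carrier G" using sg_car[OF sg h] .
    have "FQ (Node Nul (\<one>\<^bsub>G\<^esub> \<otimes>\<^bsub>G\<^esub> h) (id \<circ> tag_perm ord Nul h) []) (Node Nul \<one>\<^bsub>G\<^esub> id [])"
      by (rule feq.coset) (use ok hc in \<open>auto simp: t_def\<close>)
    thus "FQ (tact G h (a h) t) t" unfolding t_def using hc by simp
  qed
  thus ?thesis using ok unfolding t_def by auto
qed

lemma bwd_bin:
  assumes ok1: "NO t1" and ok2: "NO t2" and d1: "distinct (leaves t1)" and d2: "distinct (leaves t2)"
    and dj: "set (leaves t1) \<inter> set (leaves t2) = {}"
    and f1: "\<forall>h\<in>H. FQ (tact G h (a h) t1) t1" and f2: "\<forall>h\<in>H. FQ (tact G h (a h) t2) t2"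
    and sg: "subgroup H G"
  shows "\<exists>t. NO t \<and> distinct (leaves t) \<and> set (leaves t) = set (leaves t1) \<union> set (leaves t2)
     \<and> (\<forall>h\<in>H. FQ (tact G h (a h) t) t)"
proof -
  define t where "t = Node Bin \<one>\<^bsub>G\<^esub> id [t1, t2]"
  have ok: "NO t" unfolding t_def by (rule nodes_ok.node) (use ok1 ok2 in \<open>auto simp: permutes_id\<close>)
  have "\<forall>h\<in>H. FQ (tact G h (a h) t) t"
  proof
    fix h assume h: "h \<in> H"
    have hc: "h \<in> carrier G" using sg_car[OF sg h] .
    have "FQ (Node Bin (h \<otimes>\<^bsub>G\<^esub> \<one>\<^bsub>G\<^esub>) id [tact G h (a h) t1, tact G h (a h) t2])
              (Node Bin (h \<otimes>\<^bsub>G\<^esub> \<one>\<^bsub>G\<^esub>) id [t1, t2])"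
      by (rule feq.cong) (use f1 f2 h in auto)
    moreover have "FQ (Node Bin (\<one>\<^bsub>G\<^esub> \<otimes>\<^bsub>G\<^esub> h) (id \<circ> tag_perm ord Bin h) [t1, t2]) (Node Bin \<one>\<^bsub>G\<^esub> id [t1, t2])"
      by (rule feq.coset) (use ok hc in \<open>auto simp: t_def\<close>)
    ultimately show "FQ (tact G h (a h) t) t" unfolding t_def using hc feq.trans by fastforce
  qed
  moreover have "distinct (leaves t)" unfolding t_def using d1 d2 dj by simp
  moreover have "set (leaves t) = set (leaves t1) \<union> set (leaves t2)" unfolding t_def by simp
  ultimately show ?thesis using ok by blast
qed


lemma concat_map_single: "concat (map (\<lambda>j. [f j]) xs) = map f xs"
  by (induction xs) auto

lemma bwd_orbit:
  assumes FO: "Fset G F H L a" and j0: "j0 \<in> L" and tr: "\<forall>y\<in>L. \<exists>h\<in>H. a h j0 = y"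
    and ne: "{h\<in>H. a h j0 = j0} \<noteq> H"
  shows "\<exists>t. NO t \<and> distinct (leaves t) \<and> set (leaves t) = L \<and> (\<forall>h\<in>H. FQ (tact G h (a h) t) t)"
proof -
  have aL: "actL G H L a" using Fset_actL[OF FO] by blast
  have sg: "subgroup H G" using aL unfolding actL_def by blast
  define K where "K = {h\<in>H. a h j0 = j0}"
  have sgK: "subgroup K G" unfolding K_def using stab_subgroup[OF aL j0] .
  have KH: "K \<subset> H" using ne unfolding K_def by blast
  obtain n b e i0 where e: "bij_betw e {..<n} L" and Fb: "F H n b" and eqe: "\<forall>h\<in>H. \<forall>i<n. e (b h i) = a h (e i)"
    and i0: "i0 < n" "e i0 = j0" and fb: "fin_hset G H n b" and sb: "{h\<in>H. b h i0 = i0} = K"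
    and tb: "\<forall>j<n. \<exists>h\<in>H. b h i0 = j"
    using Fset_orbit[OF FO j0 tr] unfolding K_def by blast
  have isob: "is_orbit G H K n b" unfolding is_orbit_def using fb i0 sb tb by blast
  have HKI: "(H, K) \<in> II" unfolding O_index_def using sg sgK KH isob Fb by blast
  define k where "k = fst (ord (H, K))"
  define d where "d = snd (ord (H, K))"
  have od: "is_orbit G H K k d" using ordok HKI unfolding k_def d_def by auto
  obtain i1 where fd: "fin_hset G H k d" and i1: "i1 < k" "{h \<in> H. d h i1 = i1} = K" "\<forall>j<k. \<exists>h\<in>H. d h i1 = j"
    using od unfolding is_orbit_def by blast
  obtain f where f: "bij_betw f {..<k} {..<n}" and feqv: "\<forall>h\<in>H. \<forall>j<k. f (d h j) = b h (f j)"
    using orbit_iso[OF fd i1 fb i0(1) sb tb] by blast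
  define \<phi> where "\<phi> = e \<circ> f"
  have bphi: "bij_betw \<phi> {..<k} L" unfolding \<phi>_def using f e by (rule bij_betw_trans)
  have fl: "\<And>j. j < k \<Longrightarrow> f j < n" using f by (auto simp: bij_betw_def)
  have phieq: "\<And>h j. h \<in> H \<Longrightarrow> j < k \<Longrightarrow> \<phi> (d h j) = a h (\<phi> j)"
    unfolding \<phi>_def using feqv eqe fl by simp
  define x where "x = (Ex (H, K) :: ('g set \<times> 'g set) gtag)"
  define ts :: "('g set \<times> 'g set, 'g) ftree list" where "ts = map (\<lambda>j. Leaf (\<phi> j)) [0..<k]"
  define t where "t = Node x \<one>\<^bsub>G\<^esub> id ts"
  have tv: "tag_valid II x" unfolding x_def using HKI by simp
  have ar: "tag_ar ord x = k" unfolding x_def k_def by simp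
  have lts: "length ts = k" unfolding ts_def by simp
  have okg: "\<And>g. g \<in> carrier G \<Longrightarrow> NO (Node x g id ts)"
    by (rule nodes_ok.node) (use tv ar lts in \<open>auto simp: permutes_id ts_def intro: nodes_ok.leaf\<close>)
  have ok: "NO t" unfolding t_def using okg by simp
  have lv: "leaves t = map \<phi> [0..<k]" unfolding t_def ts_def by (simp add: comp_def concat_map_single)
  have "distinct (leaves t)" unfolding lv using bphi
    by (simp add: distinct_map bij_betw_def atLeast0LessThan)
  moreover have "set (leaves t) = L" unfolding lv using bphi by (simp add: bij_betw_def atLeast0LessThan)
  moreover have "\<forall>h\<in>H. FQ (tact G h (a h) t) t"
  proof
    fix h assume h: "h \<in> H"
    have hc: "h \<in> carrier G" using sg_car[OF sg h] .
    have hx: "h \<in> tag_grp G fst x" unfolding x_def using h by simp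
    define \<sigma> where "\<sigma> = tag_perm ord x h"
    have sp: "\<sigma> permutes {..<length ts}" unfolding \<sigma>_def using tag_permutes[OF tv hx] ar lts by simp
    have sj: "\<And>j. j < k \<Longrightarrow> \<sigma> j = d h j" unfolding \<sigma>_def x_def k_def d_def by simp
    have okh: "NO (Node x (\<one>\<^bsub>G\<^esub> \<otimes>\<^bsub>G\<^esub> h) id ts)" using okg hc by simp
    have S: "FQ (Node x (\<one>\<^bsub>G\<^esub> \<otimes>\<^bsub>G\<^esub> h) (\<sigma> \<circ> id) ts)
               (Node x (\<one>\<^bsub>G\<^esub> \<otimes>\<^bsub>G\<^esub> h) id (map (\<lambda>j. ts ! \<sigma> j) [0..<length ts]))"
      by (rule feq.sigma[OF okh sp])
    have C: "FQ (Node x (\<one>\<^bsub>G\<^esub> \<otimes>\<^bsub>G\<^esub> h) (id \<circ> tag_perm ord x h) ts) (Node x \<one>\<^bsub>G\<^esub> id ts)"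
      by (rule feq.coset[OF ok[unfolded t_def] hx])
    have mp: "map (\<lambda>j. ts ! \<sigma> j) [0..<length ts] = map (tact G h (a h)) ts"
    proof (rule nth_equalityI)
      show "length (map (\<lambda>j. ts ! \<sigma> j) [0..<length ts]) = length (map (tact G h (a h)) ts)" by simp
      fix j assume "j < length (map (\<lambda>j. ts ! \<sigma> j) [0..<length ts])"
      hence j: "j < k" using lts by simp
      have "\<sigma> j < k" using sj[OF j] fd h j unfolding fin_hset_def by auto
      thus "map (\<lambda>j. ts ! \<sigma> j) [0..<length ts] ! j = map (tact G h (a h)) ts ! j"
        using j lts sj[OF j] phieq[OF h j] unfolding ts_def by simp
    qed
    have "tact G h (a h) t = Node x (\<one>\<^bsub>G\<^esub> \<otimes>\<^bsub>G\<^esub> h) id (map (\<lambda>j. ts ! \<sigma> j) [0..<length ts])"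
      unfolding t_def mp using hc by simp
    hence "FQ (tact G h (a h) t) (Node x (\<one>\<^bsub>G\<^esub> \<otimes>\<^bsub>G\<^esub> h) (id \<circ> tag_perm ord x h) ts)"
      using feq.sym[OF S] unfolding \<sigma>_def by simp
    thus "FQ (tact G h (a h) t) t" using C feq.trans unfolding t_def by blast
  qed
  ultimately show ?thesis using ok by blast
qed

lemma bwd: "Fset G F H L a \<Longrightarrow> \<exists>t. NO t \<and> distinct (leaves t) \<and> set (leaves t) = L \<and> (\<forall>h\<in>H. FQ (tact G h (a h) t) t)"
proof (induction "card L" arbitrary: L rule: less_induct)
  case less
  note FL = less.prems
  have aL: "actL G H L a" and finL: "finite L" using Fset_actL[OF FL] by auto
  have sg: "subgroup H G" using aL unfolding actL_def by blast
  show ?case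
  proof (cases "L = {}")
    case True thus ?thesis using bwd_empty[OF sg] by simp
  next
    case False
    then obtain j0 where j0: "j0 \<in> L" by blast
    define Ob where "Ob = (\<lambda>h. a h j0) ` H"
    have ObL: "Ob \<subseteq> L" unfolding Ob_def using aL j0 unfolding actL_def by blast
    have j0O: "j0 \<in> Ob" unfolding Ob_def using aL j0 sg_one[OF sg] unfolding actL_def by (metis image_eqI)
    have hm: "\<And>h k y. h \<in> H \<Longrightarrow> k \<in> H \<Longrightarrow> y \<in> L \<Longrightarrow> a (h \<otimes>\<^bsub>G\<^esub> k) y = a h (a k y)"
      using aL unfolding actL_def by blast
    have Obinv: "\<forall>h\<in>H. \<forall>y\<in>Ob. a h y \<in> Ob"
    proof (intro ballI)
      fix h y assume h: "h \<in> H" and "y \<in> Ob"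
      then obtain k where k: "k \<in> H" "y = a k j0" unfolding Ob_def by blast
      have "a h y = a (h \<otimes>\<^bsub>G\<^esub> k) j0" using hm h k j0 by simp
      thus "a h y \<in> Ob" unfolding Ob_def using sg_mult[OF sg h k(1)] by blast
    qed
    show ?thesis
    proof (cases "Ob = L")
      case True
      have tr: "\<forall>y\<in>L. \<exists>h\<in>H. a h j0 = y" using True unfolding Ob_def by blast
      show ?thesis
      proof (cases "{h\<in>H. a h j0 = j0} = H")
        case True
        have all: "\<forall>h\<in>H. a h j0 = j0"
        proof
          fix h assume "h \<in> H"
          hence "h \<in> {h\<in>H. a h j0 = j0}" using True by simp
          thus "a h j0 = j0" by simp
        qed
        have "Ob = {j0}" unfolding Ob_def using all sg_one[OF sg] by auto
        hence L1: "L = {j0}" using \<open>Ob = L\<close> by simp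
        have "\<forall>h\<in>H. FQ (tact G h (a h) (Leaf j0)) (Leaf j0)" using all by (simp add: feq.refl)
        moreover have "NO (Leaf j0)" by (rule nodes_ok.leaf)
        ultimately show ?thesis using L1 by (intro exI[of _ "Leaf j0"]) auto
      next
        case False
        show ?thesis using bwd_orbit[OF FL j0 tr False] .
      qed
    next
      case False
      define L' where "L' = L - Ob"
      have L'inv: "\<forall>h\<in>H. \<forall>y\<in>L'. a h y \<in> L'"
      proof (intro ballI)
        fix h y assume h: "h \<in> H" and y: "y \<in> L'"
        have yL: "y \<in> L" using y unfolding L'_def by blast
        show "a h y \<in> L'"
        proof (rule ccontr)
          assume "a h y \<notin> L'"
          hence "a h y \<in> Ob" using aL h yL unfolding L'_def actL_def by blast
          hence "a (inv\<^bsub>G\<^esub> h) (a h y) \<in> Ob" using Obinv sg_inv[OF sg h] by blast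
          hence "y \<in> Ob" using actL_inv(1)[OF aL h yL] by simp
          thus False using y unfolding L'_def by blast
        qed
      qed
      have FO: "Fset G F H Ob a" using Fset_sub[OF FL ObL Obinv] .
      have FL': "Fset G F H L' a" using Fset_sub[OF FL _ L'inv] unfolding L'_def by blast
      have "Ob \<subset> L" using ObL False by blast
      hence c1: "card Ob < card L" using psubset_card_mono[OF finL] by blast
      have "L' \<subset> L" using j0 j0O unfolding L'_def by blast
      hence c2: "card L' < card L" using psubset_card_mono[OF finL] by blast
      obtain t1 where t1: "NO t1" "distinct (leaves t1)" "set (leaves t1) = Ob" "\<forall>h\<in>H. FQ (tact G h (a h) t1) t1"
        using less.hyps[OF c1 FO] by blast
      obtain t2 where t2: "NO t2" "distinct (leaves t2)" "set (leaves t2) = L'" "\<forall>h\<in>H. FQ (tact G h (a h) t2) t2"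
        using less.hyps[OF c2 FL'] by blast
      have dj: "set (leaves t1) \<inter> set (leaves t2) = {}" using t1(3) t2(3) unfolding L'_def by blast
      have "L = Ob \<union> L'" using ObL unfolding L'_def by blast
      thus ?thesis using bwd_bin[OF t1(1) t2(1) t1(2) t2(2) dj t1(4) t2(4) sg] t1(3) t2(3) by simp
    qed
  qed
qed

end

theorem proposition4p9:
  fixes G :: "'g monoid"
    and F :: "'g set \<Rightarrow> nat \<Rightarrow> ('g \<Rightarrow> nat \<Rightarrow> nat) \<Rightarrow> bool"
    and ord :: "'g set \<times> 'g set \<Rightarrow> nat \<times> ('g \<Rightarrow> nat \<Rightarrow> nat)"
  assumes "group G" and "finite (carrier G)"
    and "indexing_system G F"
    and "\<forall>HK \<in> O_index G F. is_orbit G (fst HK) (snd HK) (fst (ord HK)) (snd (ord HK))"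
  shows "\<forall>H n a. subgroup H G \<longrightarrow> fin_hset G H n a \<longrightarrow>
           (SM_admissible G (O_index G F) fst ord H n a \<longleftrightarrow> F H n a)"
proof -
  interpret smctx G F ord
    by (rule smctx.intro, rule isys.intro[OF assms(1,3)], rule smctx_axioms.intro[OF assms(4)])
  show ?thesis
  proof (intro allI impI)
    fix H n a assume sg: "subgroup H G" and fh: "fin_hset G H n a"
    have aL: "actL G H {..<n} a" using fh unfolding fin_hset_def actL_def by auto
    show "SM_admissible G (O_index G F) fst ord H n a \<longleftrightarrow> F H n a"
    proof
      assume "SM_admissible G (O_index G F) fst ord H n a"
      then obtain t where wf: "wf_tree G II ord n t" and fx: "\<forall>h\<in>H. FQ (tact G h (a h) t) t"
        unfolding SM_admissible_def by blast
      have ok: "NO t" and d: "distinct (leaves t)" and st: "set (leaves t) = {..<n}"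
        using wf unfolding wf_tree_def by auto
      have "\<forall>h\<in>H. R (tact G h (a h) t) t" using fx feq_Rt ok by blast
      hence "Fset G F H (set (leaves t)) a" using fwd[OF ok d] aL st by simp
      hence "Fset G F H {..<n} a" using st by simp
      thus "F H n a" using Fset_enum[of H "{..<n}" a id n a] fh bij_betw_id by auto
    next
      assume "F H n a"
      hence "Fset G F H {..<n} a" by (rule Fset_id)
      then obtain t where "NO t" "distinct (leaves t)" "set (leaves t) = {..<n}" "\<forall>h\<in>H. FQ (tact G h (a h) t) t"
        using bwd by blast
      thus "SM_admissible G (O_index G F) fst ord H n a" unfolding SM_admissible_def wf_tree_def by blast
    qed
  qed
qed


end
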